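(* Let $A\in\mathbb{C}^{n\times n}$ and let $\lambda$ be an eigenvalue of $A$ of algebraic multiplicity $m$ whose nonzero Weyr characteristic is $m_1\ge m_2\ge\cdots\ge m_k>0$. Set $\mu_0=0$, $\mu_j=m_1+\cdots+m_j$ for $j=1,\dots,k$, and $$\Phi_\lambda=\{(i,j)\;:\;\mu_{l-1}<i\le\mu_l,\ i<j\le\mu_l,\ l=1,\dots,k\}.$$ Then for almost all $\mathbf{b}_1,\dots,\mathbf{b}_m\in\mathbb{C}^n$ there exist a matrix $U=[\mathbf{u}_1,\dots,\mathbf{u}_m]\in\mathbb{C}^{n\times m}$ with $U^{\mathsf H}U=I_m$ and a staircase nilpotent matrix $S\in\mathbb{C}^{m\times m}$ (with respect to $m_1,\dots,m_k$) such that $$AU-U(\lambda I_m+S)=O\quad\text{and}\quad \mathbf{u}_i^{\mathsf H}\mathbf{b}_j=0\ \text{ for every }(i,j)\in\Phi_\lambda.$$ Moreover, if $\hat U=[\hat{\mathbf u}_1,\dots,\hat{\mathbf u}_m]\in\mathbb{C}^{n\times m}$ with $\hat U^{\mathsf H}\hat U=I_m$ and a staircase nilpotent matrix $\hat S$ also satisfy these two conditions in place of $U$ and $S$, then $\hat S=\hat U^{\mathsf H}(A-\lambda I)\hat U$, where $\hat U=UD$ for a diagonal matrix $D=\mathrm{diag}(\alpha_1,\dots,\alpha_m)$ with $|\alpha_1|=\cdots=|\alpha_m|=1$.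
   Context: The Weyr characteristic of $A$ at $\lambda$ is the sequence $m_j=\dim\ker(A-\lambda I)^j-\dim\ker(A-\lambda I)^{j-1}$, $j=1,2,\dots$; it is nonincreasing, its nonzero part is $m_1\ge\cdots\ge m_k$, and $m_1+\cdots+m_k=m$. A staircase nilpotent matrix with respect to $m_1,\dots,m_k$ is a matrix $S\in\mathbb{C}^{m\times m}$ which, partitioned into blocks $S_{ij}\in\mathbb{C}^{m_i\times m_j}$ ($1\le i,j\le k$), has $S_{ij}=O$ whenever $i\ge j$ (zero diagonal blocks and zero blocks below the block diagonal). $X^{\mathsf H}$ denotes the conjugate transpose. "For almost all" means for all vectors outside a subset of Lebesgue measure zero. *)

theory Defs
  imports "HOL-Analysis.Analysis"
    "Jordan_Normal_Form.Jordan_Normal_Form"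
    "Jordan_Normal_Form.Schur_Decomposition"
    "Jordan_Normal_Form.Matrix_Kernel"
begin

definition weyr :: "complex mat \<Rightarrow> complex \<Rightarrow> nat \<Rightarrow> nat" where
  "weyr A lam j =
     kernel_dim ((A - lam \<cdot>\<^sub>m 1\<^sub>m (dim_row A)) ^\<^sub>m j)
   - kernel_dim ((A - lam \<cdot>\<^sub>m 1\<^sub>m (dim_row A)) ^\<^sub>m (j - 1))"

definition weyr_mu :: "complex mat \<Rightarrow> complex \<Rightarrow> nat \<Rightarrow> nat" where
  "weyr_mu A lam l = (\<Sum>j=1..l. weyr A lam j)"

text \<open>Block index (1-based) of the 0-based row/column index p:
  the unique l \<ge> 1 with mu_(l-1) \<le> p < mu_l.\<close>
definition weyr_block :: "complex mat \<Rightarrow> complex \<Rightarrow> nat \<Rightarrow> nat" where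
  "weyr_block A lam p = (LEAST l. p < weyr_mu A lam l)"

definition staircase :: "complex mat \<Rightarrow> complex \<Rightarrow> nat \<Rightarrow> complex mat \<Rightarrow> bool" where
  "staircase A lam m S \<longleftrightarrow> S \<in> carrier_mat m m \<and>
     (\<forall>p<m. \<forall>q<m. weyr_block A lam p \<ge> weyr_block A lam q \<longrightarrow> S $$ (p,q) = 0)"

text \<open>The index set Phi_lambda, written with 0-based indices:
  (i,j) with mu_(l-1) \<le> i < mu_l and i < j < mu_l for some l in 1..k.\<close>
definition Phi :: "complex mat \<Rightarrow> complex \<Rightarrow> (nat \<times> nat) set" where
  "Phi A lam = {(i,j). \<exists>l. 1 \<le> l \<and> weyr A lam l > 0 \<and>
      weyr_mu A lam (l - 1) \<le> i \<and> i < weyr_mu A lam l \<and> i < j \<and> j < weyr_mu A lam l}"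

definition good_pair :: "complex mat \<Rightarrow> complex \<Rightarrow> nat \<Rightarrow> (nat \<times> nat \<Rightarrow> complex)
    \<Rightarrow> complex mat \<Rightarrow> complex mat \<Rightarrow> bool" where
  "good_pair A lam m b U S \<longleftrightarrow>
     U \<in> carrier_mat (dim_row A) m \<and> mat_adjoint U * U = 1\<^sub>m m \<and>
     staircase A lam m S \<and>
     A * U - U * (lam \<cdot>\<^sub>m 1\<^sub>m m + S) = 0\<^sub>m (dim_row A) m \<and>
     (\<forall>(i,j)\<in>Phi A lam. conjugate (col U i) \<bullet> vec (dim_row A) (\<lambda>r. b (r,j)) = 0)"

end

theory Submission
  imports Defs "Jordan_Normal_Form.DL_Rank"
    "Jordan_Normal_Form.Jordan_Normal_Form_Existence" "Jordan_Normal_Form.Jordan_Normal_Form_Uniqueness"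
begin


inductive pf :: "'i set \<Rightarrow> (('i \<Rightarrow> complex) \<Rightarrow> complex) \<Rightarrow> bool" for I where
  pf_const: "pf I (\<lambda>_. c)"
| pf_var: "i \<in> I \<Longrightarrow> pf I (\<lambda>b. b i)"
| pf_add: "pf I f \<Longrightarrow> pf I g \<Longrightarrow> pf I (\<lambda>b. f b + g b)"
| pf_mult: "pf I f \<Longrightarrow> pf I g \<Longrightarrow> pf I (\<lambda>b. f b * g b)"

lemma pf_sum: "finite S \<Longrightarrow> (\<And>s. s \<in> S \<Longrightarrow> pf I (f s)) \<Longrightarrow> pf I (\<lambda>b. \<Sum>s\<in>S. f s b)"
  by (induct S rule: finite_induct) (auto intro: pf.intros)

lemma pf_prod: "finite S \<Longrightarrow> (\<And>s. s \<in> S \<Longrightarrow> pf I (f s)) \<Longrightarrow> pf I (\<lambda>b. \<Prod>s\<in>S. f s b)"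
  by (induct S rule: finite_induct) (auto intro: pf.intros)

lemma pf_local: "pf I f \<Longrightarrow> (\<And>i. i \<in> I \<Longrightarrow> b i = b' i) \<Longrightarrow> f b = f b'"
  by (induct rule: pf.induct) auto

lemma pf_measurable: "pf I f \<Longrightarrow> f \<in> borel_measurable (PiM I (\<lambda>_. lborel))"
proof (induct rule: pf.induct)
  case (pf_var i)
  then show ?case using measurable_component_singleton[of i I "\<lambda>_. lborel"] by simp
qed auto

lemma pf_decomp:
  assumes "pf I f" "I = insert i J" "i \<notin> J"
  shows "\<exists>p. (\<forall>k. pf J (\<lambda>x. coeff (p x) k)) \<and> (\<forall>b. f b = poly (p b) (b i))"
  using assms(1)
proof (induct rule: pf.induct)
  case (pf_const c)
  show ?case
    by (rule exI[of _ "\<lambda>_. [:c:]"]) (auto intro: pf.intros simp: coeff_pCons split: nat.splits)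
next
  case (pf_var j)
  show ?case
  proof (cases "j = i")
    case True
    show ?thesis using True
      by (intro exI[of _ "\<lambda>_. [:0,1:]"]) (auto intro: pf.intros)
  next
    case False
    with pf_var assms have j: "j \<in> J" by auto
    have "pf J (\<lambda>x. coeff [:x j:] k)" for k
      by (cases k) (auto intro: pf.intros j)
    then show ?thesis
      by (intro exI[of _ "\<lambda>b. [:b j:]"]) auto
  qed
next
  case (pf_add f g)
  then obtain p q where p1: "\<And>k. pf J (\<lambda>x. coeff (p x) k)" and p2: "\<And>b. f b = poly (p b) (b i)"
    and q1: "\<And>k. pf J (\<lambda>x. coeff (q x) k)" and q2: "\<And>b. g b = poly (q b) (b i)" by blast
  show ?case
    by (rule exI[of _ "\<lambda>b. p b + q b"]) (auto intro!: pf.intros p1 q1 simp: p2 q2)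
next
  case (pf_mult f g)
  then obtain p q where p1: "\<And>k. pf J (\<lambda>x. coeff (p x) k)" and p2: "\<And>b. f b = poly (p b) (b i)"
    and q1: "\<And>k. pf J (\<lambda>x. coeff (q x) k)" and q2: "\<And>b. g b = poly (q b) (b i)" by blast
  have "pf J (\<lambda>x. coeff (p x * q x) k)" for k
    unfolding coeff_mult
    by (rule pf_sum) (auto intro!: pf.intros p1 q1)
  then show ?case
    by (intro exI[of _ "\<lambda>b. p b * q b"]) (auto simp: p2 q2)
qed

lemma pf_null:
  assumes "finite I"
  shows "pf I f \<Longrightarrow> b0 \<in> space (PiM I (\<lambda>_. lborel)) \<Longrightarrow> f b0 \<noteq> 0 \<Longrightarrow>
    {b \<in> space (PiM I (\<lambda>_. lborel)). f b = 0} \<in> null_sets (PiM I (\<lambda>_. (lborel :: complex measure)))"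
  using assms
proof (induct I arbitrary: f b0 rule: finite_induct)
  case empty
  have "{b \<in> space (PiM {} (\<lambda>_. lborel)). f b = 0} = {}"
  proof safe
    fix b assume "b \<in> space (PiM {} (\<lambda>_. (lborel :: complex measure)))" "f b = 0"
    moreover have "f b = f b0" by (rule pf_local[OF empty(1)]) auto
    ultimately show "b \<in> {}" using empty by auto
  qed
  then show ?case by (simp only:) simp
next
  case (insert i J)
  interpret product_sigma_finite "\<lambda>_. (lborel :: complex measure)" by standard
  let ?M = "PiM (insert i J) (\<lambda>_. (lborel :: complex measure))"
  let ?Z = "{b \<in> space ?M. f b = 0}"
  let ?MJ = "PiM J (\<lambda>_. (lborel :: complex measure))"
  obtain p where p: "\<And>k. pf J (\<lambda>x. coeff (p x) k)" "\<And>b. f b = poly (p b) (b i)"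
    using pf_decomp[OF insert(4) refl insert(2)] by blast
  have pJ: "p (x(i := y)) = p x" for x y
  proof -
    have "coeff (p (x(i := y))) k = coeff (p x) k" for k
      by (rule pf_local[OF p(1)]) (use insert(2) in auto)
    then show ?thesis by (simp add: poly_eq_iff)
  qed
  from insert(6) have "p b0 \<noteq> 0" using p(2) by auto
  then obtain k where k: "coeff (p b0) k \<noteq> 0" by (meson leading_coeff_0_iff)
  define x0 where "x0 = restrict b0 J"
  have x0: "x0 \<in> space (PiM J (\<lambda>_. (lborel :: complex measure)))"
    unfolding x0_def space_PiM by auto
  have "coeff (p x0) k = coeff (p b0) k"
    by (rule pf_local[OF p(1)]) (auto simp: x0_def)
  with k have "coeff (p x0) k \<noteq> 0" by simp
  from insert(3)[OF p(1) x0 this] 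
  have N: "{x \<in> space (PiM J (\<lambda>_. lborel)). coeff (p x) k = 0} \<in> null_sets (PiM J (\<lambda>_. (lborel :: complex measure)))" .
  have fm: "f \<in> borel_measurable ?M" by (rule pf_measurable[OF insert(4)])
  have Zs: "?Z \<in> sets ?M"
  proof -
    have "f -` {0} \<inter> space ?M \<in> sets ?M" by (rule measurable_sets[OF fm]) auto
    moreover have "f -` {0} \<inter> space ?M = ?Z" by auto
    ultimately show ?thesis by simp
  qed
  have "emeasure ?M ?Z = (\<integral>\<^sup>+ b. indicator ?Z b \<partial>?M)" using Zs by simp
  also have "\<dots> = (\<integral>\<^sup>+ x. (\<integral>\<^sup>+ y. indicator ?Z (x(i := y)) \<partial>lborel) \<partial>?MJ)"
    by (rule product_nn_integral_insert) (use insert Zs in auto)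
  also have "\<dots> = (\<integral>\<^sup>+ x. 0 \<partial>?MJ)"
  proof (rule nn_integral_cong_AE)
    have "AE x in ?MJ. x \<notin> {x \<in> space ?MJ. coeff (p x) k = 0}"
      by (rule AE_not_in[OF N])
    then show "AE x in ?MJ. (\<integral>\<^sup>+ y. indicator ?Z (x(i := y)) \<partial>lborel) = 0"
    proof (rule AE_mp, intro AE_I2 impI)
      fix x assume x: "x \<in> space ?MJ"
        and "x \<notin> {x \<in> space ?MJ. coeff (p x) k = 0}"
      then have "coeff (p x) k \<noteq> 0" by auto
      then have px: "p x \<noteq> 0" by auto
      have fin: "finite {y. poly (p x) y = 0}" by (rule poly_roots_finite[OF px])
      have "(indicator ?Z (x(i := y)) :: ennreal) = indicator {y. poly (p x) y = 0} y" for y :: complex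
      proof -
        have "x(i := y) \<in> space ?M" using x unfolding space_PiM by (auto simp: PiE_iff extensional_def)
        then show ?thesis using p(2)[of "x(i := y)"] pJ[of x y] by (auto simp: indicator_def)
      qed
      then have "(\<integral>\<^sup>+ y. indicator ?Z (x(i := y)) \<partial>lborel) = (\<integral>\<^sup>+ y. indicator {y. poly (p x) y = 0} y \<partial>lborel)"
        by simp
      also have "\<dots> = emeasure lborel {y. poly (p x) y = 0}"
        by (rule nn_integral_indicator) (use fin in \<open>simp add: finite_imp_closed borel_closed\<close>)
      also have "\<dots> = 0"
        using countable_imp_null_set_lborel[OF countable_finite[OF fin]] by auto
      finally show "(\<integral>\<^sup>+ y. indicator ?Z (x(i := y)) \<partial>lborel) = 0" .
    qed
  qed
  also have "\<dots> = 0" by simp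
  finally show ?case using Zs by (auto intro: null_setsI)
qed


unbundle no inner_syntax
unbundle no vec_syntax

lemma mat_vec_zero[simp]: "M \<in> carrier_mat nr nc \<Longrightarrow> M *\<^sub>v 0\<^sub>v nc = 0\<^sub>v nr"
  by (rule eq_vecI) auto

definition lc :: "nat \<Rightarrow> nat \<Rightarrow> (nat \<Rightarrow> complex) \<Rightarrow> (nat \<Rightarrow> complex vec) \<Rightarrow> complex vec" where
  "lc n k c u = Matrix.vec n (\<lambda>r. \<Sum>i<k. c i * u i $ r)"

lemma lc_carrier[simp]: "lc n k c u \<in> carrier_vec n" "dim_vec (lc n k c u) = n"
  by (auto simp: lc_def)

lemma lc_index[simp]: "r < n \<Longrightarrow> lc n k c u $ r = (\<Sum>i<k. c i * u i $ r)"
  by (simp add: lc_def)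

lemma cip_def: "v \<in> carrier_vec n \<Longrightarrow> w \<in> carrier_vec n \<Longrightarrow>
   conjugate v \<bullet> w = (\<Sum>r<n. cnj (v $ r) * w $ r)"
  unfolding scalar_prod_def by (auto intro!: sum.cong simp: atLeast0LessThan)

lemma mult_mat_vec_index_sum: "M \<in> carrier_mat nr n \<Longrightarrow> v \<in> carrier_vec n \<Longrightarrow> r < nr \<Longrightarrow>
  (M *\<^sub>v v) $ r = (\<Sum>j<n. M $$ (r,j) * v $ j)"
  unfolding mult_mat_vec_def scalar_prod_def by (auto intro!: sum.cong simp: atLeast0LessThan)

lemma ip_lc: assumes "w \<in> carrier_vec n" "\<And>i. i < k \<Longrightarrow> u i \<in> carrier_vec n"
  shows "conjugate w \<bullet> lc n k c u = (\<Sum>i<k. c i * (conjugate w \<bullet> u i))"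
proof -
  have "conjugate w \<bullet> lc n k c u = (\<Sum>r<n. cnj (w $ r) * (\<Sum>i<k. c i * u i $ r))"
    using assms by (simp add: cip_def)
  also have "\<dots> = (\<Sum>i<k. c i * (\<Sum>r<n. cnj (w $ r) * u i $ r))"
    by (simp add: sum_distrib_left sum_distrib_right mult_ac sum.swap[of _ "{..<n}"])
  also have "\<dots> = (\<Sum>i<k. c i * (conjugate w \<bullet> u i))"
    using assms by (simp add: cip_def)
  finally show ?thesis .
qed

lemma mult_lc: assumes M: "M \<in> carrier_mat nr n" and u: "\<And>i. i < k \<Longrightarrow> u i \<in> carrier_vec n"
  shows "M *\<^sub>v lc n k c u = lc nr k c (\<lambda>i. M *\<^sub>v u i)"
proof (rule eq_vecI)
  fix r assume r: "r < dim_vec (lc nr k c (\<lambda>i. M *\<^sub>v u i))"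
  then have r: "r < nr" by simp
  have "(M *\<^sub>v lc n k c u) $ r = row M r \<bullet> lc n k c u" using M r by simp
  also have "\<dots> = (\<Sum>j<n. M $$ (r,j) * (\<Sum>i<k. c i * u i $ j))"
    unfolding scalar_prod_def using M r by (auto intro!: sum.cong simp: atLeast0LessThan)
  also have "\<dots> = (\<Sum>i<k. c i * (\<Sum>j<n. M $$ (r,j) * u i $ j))"
    by (simp add: sum_distrib_left sum_distrib_right mult_ac sum.swap[of _ "{..<n}"])
  also have "\<dots> = (\<Sum>i<k. c i * (M *\<^sub>v u i) $ r)"
  proof (rule sum.cong[OF refl])
    fix i assume "i \<in> {..<k}"
    then have "u i \<in> carrier_vec n" using u by auto
    then show "c i * (\<Sum>j<n. M $$ (r,j) * u i $ j) = c i * (M *\<^sub>v u i) $ r"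
      using M r by (simp del: index_mult_mat_vec add: mult_mat_vec_index_sum)
  qed
  finally show "(M *\<^sub>v lc n k c u) $ r = lc nr k c (\<lambda>i. M *\<^sub>v u i) $ r" using r by simp
qed (use M in auto)

lemma wide_kernel:
  assumes C: "(C :: complex mat) \<in> carrier_mat r k" and rk: "r < k"
  shows "\<exists>v. v \<in> carrier_vec k \<and> v \<noteq> 0\<^sub>v k \<and> C *\<^sub>v v = 0\<^sub>v r"
proof -
  define C' where "C' = Matrix.mat k k (\<lambda>(i,j). if i < r then C $$ (i,j) else 0)"
  have C': "C' \<in> carrier_mat k k" unfolding C'_def by simp
  have Ct: "transpose_mat C' \<in> carrier_mat k k" using C' by simp
  have "transpose_mat C' *\<^sub>v unit_vec k (k - 1) = 0\<^sub>v k"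
  proof (rule eq_vecI)
    fix i assume "i < dim_vec (0\<^sub>v k :: complex vec)"
    then have i: "i < k" by simp
    have "(transpose_mat C' *\<^sub>v unit_vec k (k - 1)) $ i = (\<Sum>j<k. transpose_mat C' $$ (i,j) * unit_vec k (k - 1) $ j)"
      using i Ct by (simp del: index_mult_mat_vec add: mult_mat_vec_index_sum)
    also have "\<dots> = 0"
    proof (rule sum.neutral, intro ballI)
      fix j assume "j \<in> {..<k}"
      then show "transpose_mat C' $$ (i,j) * unit_vec k (k - 1) $ j = 0"
        using i rk unfolding C'_def by auto
    qed
    finally show "(transpose_mat C' *\<^sub>v unit_vec k (k - 1)) $ i = 0\<^sub>v k $ i" using i by simp
  qed (use Ct in auto)
  moreover have "unit_vec k (k - 1) \<noteq> (0\<^sub>v k :: complex vec)"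
  proof
    assume "unit_vec k (k - 1) = (0\<^sub>v k :: complex vec)"
    then have "unit_vec k (k - 1) $ (k - 1) = (0\<^sub>v k :: complex vec) $ (k - 1)" by simp
    then show False using rk by simp
  qed
  ultimately have "Determinant.det (transpose_mat C') = 0"
    using det_0_iff_vec_prod_zero_field[OF Ct] unit_vec_carrier by blast
  then have "Determinant.det C' = 0" using det_transpose[OF C'] by simp
  then obtain v where v: "v \<in> carrier_vec k" "v \<noteq> 0\<^sub>v k" "C' *\<^sub>v v = 0\<^sub>v k"
    using det_0_iff_vec_prod_zero_field[OF C'] by auto
  have "C *\<^sub>v v = 0\<^sub>v r"
  proof (rule eq_vecI)
    fix i assume "i < dim_vec (0\<^sub>v r :: complex vec)"
    then have i: "i < r" by simp
    have "(C' *\<^sub>v v) $ i = 0" using v(3) i rk by simp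
    moreover have "(C' *\<^sub>v v) $ i = (C *\<^sub>v v) $ i"
      using i rk C v(1) C' by (simp del: index_mult_mat_vec add: mult_mat_vec_index_sum) (simp add: C'_def)
    ultimately show "(C *\<^sub>v v) $ i = 0\<^sub>v r $ i" using i by simp
  qed (use C in auto)
  with v show ?thesis by blast
qed


abbreviation lindep :: "nat \<Rightarrow> complex vec set \<Rightarrow> bool" where
  "lindep n W \<equiv> LinearCombinations.module.lin_dep class_ring (module_vec TYPE(complex) n) W"

lemma kernel_li_le:
  assumes M: "(M :: complex mat) \<in> carrier_mat nr nc" and W: "W \<subseteq> mat_kernel M" and li: "\<not> lindep nc W"
  shows "finite W \<and> card W \<le> kernel_dim M"
proof -
  interpret K: kernel nr nc M by unfold_locales (rule M)
  obtain B where B: "finite B" "K.basis B" using kernel_basis_exists[OF M] by blast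
  have fd: "K.Ker.fin_dim" using B unfolding K.Ker.fin_dim_def K.Ker.basis_def by auto
  have li': "\<not> K.lin_dep W" using K.lindep_same[OF W] li by simp
  from K.Ker.li_le_dim[OF fd _ li'] W show ?thesis by simp
qed

lemma ip_lincomb:
  fixes y :: "complex vec" and A :: "complex vec set"
  assumes y: "y \<in> carrier_vec n" and A: "finite A" "A \<subseteq> carrier_vec n"
  shows "conjugate y \<bullet> LinearCombinations.module.lincomb (module_vec TYPE(complex) n) a A = (\<Sum>w\<in>A. a w * (conjugate y \<bullet> w))"
proof -
  interpret vec_space "TYPE(complex)" n .
  have lcc: "lincomb a A \<in> carrier_vec n" using A by (intro lincomb_closed) auto
  have "conjugate y \<bullet> lincomb a A = (\<Sum>r<n. cnj (y $ r) * (\<Sum>w\<in>A. a w * w $ r))"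
    using y lcc A by (simp add: cip_def lincomb_index)
  also have "\<dots> = (\<Sum>w\<in>A. a w * (\<Sum>r<n. cnj (y $ r) * w $ r))"
    by (simp add: sum_distrib_left sum_distrib_right mult_ac sum.swap[of _ "{..<n}"])
  also have "\<dots> = (\<Sum>w\<in>A. a w * (conjugate y \<bullet> w))"
    using y A by (intro sum.cong refl) (auto simp: cip_def)
  finally show ?thesis .
qed

lemma orth_li:
  fixes u :: "nat \<Rightarrow> complex vec"
  assumes u: "\<And>i. i < k \<Longrightarrow> u i \<in> carrier_vec n"
    and orth: "\<And>i j. i < k \<Longrightarrow> j < k \<Longrightarrow> i \<noteq> j \<Longrightarrow> conjugate (u i) \<bullet> u j = 0"
    and nz: "\<And>i. i < k \<Longrightarrow> conjugate (u i) \<bullet> u i \<noteq> 0"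
  shows "inj_on u {..<k}" "\<not> lindep n (u ` {..<k})"
proof -
  show inj: "inj_on u {..<k}"
  proof (rule inj_onI, rule ccontr)
    fix i j assume "i \<in> {..<k}" "j \<in> {..<k}" "u i = u j" "i \<noteq> j"
    then show False using orth[of i j] nz[of i] by auto
  qed
  interpret NC: vec_space "TYPE(complex)" n .
  show "\<not> lindep n (u ` {..<k})"
  proof (rule NC.finite_lin_indpt2)
    show "finite (u ` {..<k})" by simp
    show "u ` {..<k} \<subseteq> carrier_vec n" using u by auto
    fix a assume a: "True" and
      lc0: "NC.lincomb a (u ` {..<k}) = 0\<^sub>v n"
    show "\<forall>v\<in>u ` {..<k}. a v = 0"
    proof
      fix v assume "v \<in> u ` {..<k}"
      then obtain j where j: "j < k" "v = u j" by auto
      have "conjugate (u j) \<bullet> NC.lincomb a (u ` {..<k}) = 0"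
        using lc0 u[OF j(1)] by simp
      moreover have "conjugate (u j) \<bullet> NC.lincomb a (u ` {..<k}) = (\<Sum>w\<in>u ` {..<k}. a w * (conjugate (u j) \<bullet> w))"
        by (rule ip_lincomb) (use u j in auto)
      moreover have "\<dots> = (\<Sum>i<k. a (u i) * (conjugate (u j) \<bullet> u i))"
        by (rule sum.reindex_cong[OF inj refl]) simp
      moreover have "\<dots> = a (u j) * (conjugate (u j) \<bullet> u j)"
      proof -
        have "(\<Sum>i<k. a (u i) * (conjugate (u j) \<bullet> u i)) = a (u j) * (conjugate (u j) \<bullet> u j) +
            (\<Sum>i\<in>{..<k} - {j}. a (u i) * (conjugate (u j) \<bullet> u i))"
          using j by (subst sum.remove[of _ j]) auto
        also have "(\<Sum>i\<in>{..<k} - {j}. a (u i) * (conjugate (u j) \<bullet> u i)) = 0"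
          using orth j by (intro sum.neutral) auto
        finally show ?thesis by simp
      qed
      ultimately show "a v = 0" using nz[OF j(1)] j by simp
    qed
  qed
qed

lemma kernel_orth_exists:
  fixes v :: "nat \<Rightarrow> complex vec"
  assumes M: "(M :: complex mat) \<in> carrier_mat nr n"
    and v: "\<And>i. i < r \<Longrightarrow> v i \<in> carrier_vec n"
    and r: "r < kernel_dim M"
  shows "\<exists>x. x \<in> mat_kernel M \<and> x \<noteq> 0\<^sub>v n \<and> (\<forall>i<r. conjugate (v i) \<bullet> x = 0)"
proof -
  interpret K: kernel nr n M by unfold_locales (rule M)
  obtain B where B: "finite B" "K.basis B" using kernel_basis_exists[OF M] by blast
  have Bk: "B \<subseteq> mat_kernel M" using B(2) unfolding K.Ker.basis_def by auto
  have Bc: "B \<subseteq> carrier_vec n" using Bk mat_kernel_carrier[OF M] by auto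
  have Bli: "\<not> lindep n B" using B(2) K.lindep_same[OF Bk] unfolding K.Ker.basis_def by auto
  have cardB: "card B = kernel_dim M" using K.Ker.dim_basis[OF B(1) B(2)] by simp
  obtain bs where bs: "set bs = B" "distinct bs" using finite_distinct_list[OF B(1)] by blast
  let ?k = "length bs"
  have lk: "?k = kernel_dim M" using bs cardB distinct_card by fastforce
  define Bm where "Bm = mat_of_cols n bs"
  have Bm: "Bm \<in> carrier_mat n ?k" unfolding Bm_def by simp
  have colsB: "cols Bm = bs" unfolding Bm_def using bs Bc by simp
  define V where "V = Matrix.mat r n (\<lambda>(i,j). cnj (v i $ j))"
  have V: "V \<in> carrier_mat r n" unfolding V_def by simp
  have C: "V * Bm \<in> carrier_mat r ?k" using V Bm by simp
  from wide_kernel[OF C] r lk obtain c where c: "c \<in> carrier_vec ?k" "c \<noteq> 0\<^sub>v ?k" "(V * Bm) *\<^sub>v c = 0\<^sub>v r"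
    by auto
  define x where "x = Bm *\<^sub>v c"
  have xc: "x \<in> carrier_vec n" unfolding x_def using Bm c by simp
  have MB: "M * Bm = 0\<^sub>m nr ?k"
  proof (rule eq_matI)
    fix i j assume ij: "i < dim_row (0\<^sub>m nr ?k :: complex mat)" "j < dim_col (0\<^sub>m nr ?k :: complex mat)"
    then have "col Bm j \<in> mat_kernel M" using colsB bs Bk Bm
      by (metis carrier_matD(2) cols_length cols_nth nth_mem subset_iff index_zero_mat(3))
    then have "M *\<^sub>v col Bm j = 0\<^sub>v nr" using mat_kernelD[OF M] by auto
    then have "(M *\<^sub>v col Bm j) $ i = 0" using ij by simp
    then show "(M * Bm) $$ (i, j) = 0\<^sub>m nr ?k $$ (i, j)" using ij M Bm by simp
  qed (use M Bm in auto)
  have z: "0\<^sub>m nr ?k *\<^sub>v c = 0\<^sub>v nr"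
    by (rule eq_vecI) (use c(1) in \<open>auto simp: scalar_prod_def\<close>)
  have "M *\<^sub>v x = 0\<^sub>v nr" unfolding x_def
    using assoc_mult_mat_vec[OF M Bm c(1), symmetric] MB c(1) z by simp
  then have xk: "x \<in> mat_kernel M" using mat_kernelI[OF M xc] by simp
  have xnz: "x \<noteq> 0\<^sub>v n"
  proof
    assume "x = 0\<^sub>v n"
    have "lindep n (set (cols Bm))"
      by (rule K.NC.lin_depI[OF Bm c(1) c(2)]) (use \<open>x = 0\<^sub>v n\<close> x_def colsB bs in auto)
    then show False using Bli colsB bs by simp
  qed
  have "\<forall>i<r. conjugate (v i) \<bullet> x = 0"
  proof (intro allI impI)
    fix i assume i: "i < r"
    have "(V *\<^sub>v x) $ i = 0" unfolding x_def
      using assoc_mult_mat_vec[OF V Bm c(1), symmetric] c(3) i by simp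
    moreover have "(V *\<^sub>v x) $ i = conjugate (v i) \<bullet> x"
    proof -
      have "(V *\<^sub>v x) $ i = (\<Sum>j<n. V $$ (i,j) * x $ j)" by (rule mult_mat_vec_index_sum[OF V xc i])
      also have "\<dots> = conjugate (v i) \<bullet> x" using i v[OF i] xc by (simp add: V_def cip_def)
      finally show ?thesis .
    qed
    ultimately show "conjugate (v i) \<bullet> x = 0" by simp
  qed
  with xk xnz show ?thesis by blast
qed

lemma kernel_expand:
  fixes u :: "nat \<Rightarrow> complex vec"
  assumes M: "(M :: complex mat) \<in> carrier_mat nr n"
    and u: "\<And>i. i < k \<Longrightarrow> u i \<in> mat_kernel M"
    and on: "\<And>i j. i < k \<Longrightarrow> j < k \<Longrightarrow> conjugate (u i) \<bullet> u j = (if i = j then 1 else 0)"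
    and kd: "kernel_dim M \<le> k"
    and x: "x \<in> mat_kernel M"
  shows "x = lc n k (\<lambda>i. conjugate (u i) \<bullet> x) u"
proof (rule ccontr)
  assume ne: "x \<noteq> lc n k (\<lambda>i. conjugate (u i) \<bullet> x) u"
  have uc: "\<And>i. i < k \<Longrightarrow> u i \<in> carrier_vec n" using u mat_kernel_carrier[OF M] by auto
  have xc: "x \<in> carrier_vec n" using x mat_kernel_carrier[OF M] by auto
  define y where "y = x - lc n k (\<lambda>i. conjugate (u i) \<bullet> x) u"
  have yc: "y \<in> carrier_vec n" unfolding y_def using xc by simp
  have ynz: "y \<noteq> 0\<^sub>v n"
  proof
    assume "y = 0\<^sub>v n"
    have "x = lc n k (\<lambda>i. conjugate (u i) \<bullet> x) u"
    proof (rule eq_vecI)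
      fix i assume i: "i < dim_vec (lc n k (\<lambda>i. conjugate (u i) \<bullet> x) u)"
      then have "y $ i = 0" using \<open>y = 0\<^sub>v n\<close> by simp
      then show "x $ i = lc n k (\<lambda>i. conjugate (u i) \<bullet> x) u $ i" using xc i unfolding y_def by simp
    qed (use xc in simp)
    with ne show False by simp
  qed
  have "M *\<^sub>v lc n k (\<lambda>i. conjugate (u i) \<bullet> x) u = lc nr k (\<lambda>i. conjugate (u i) \<bullet> x) (\<lambda>i. M *\<^sub>v u i)"
    by (rule mult_lc[OF M uc])
  also have "\<dots> = 0\<^sub>v nr"
    by (rule eq_vecI) (use u mat_kernelD[OF M] in auto)
  finally have "M *\<^sub>v y = 0\<^sub>v nr" unfolding y_def using mult_minus_distrib_mat_vec[OF M xc lc_carrier(1)]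
    mat_kernelD[OF M x] by simp
  then have yk: "y \<in> mat_kernel M" using mat_kernelI[OF M yc] by simp
  have yo: "conjugate (u j) \<bullet> y = 0" if j: "j < k" for j
  proof -
    have "conjugate (u j) \<bullet> lc n k (\<lambda>i. conjugate (u i) \<bullet> x) u = (\<Sum>i<k. (conjugate (u i) \<bullet> x) * (conjugate (u j) \<bullet> u i))"
      by (rule ip_lc) (use uc j in auto)
    also have "\<dots> = (\<Sum>i<k. if i = j then conjugate (u j) \<bullet> x else 0)"
      by (rule sum.cong) (use on j in auto)
    also have "\<dots> = conjugate (u j) \<bullet> x" using j by simp
    finally show ?thesis unfolding y_def
      using scalar_prod_minus_distrib[OF carrier_vec_conjugate[OF uc[OF j]] xc lc_carrier(1)] by simp
  qed
  define u' where "u' = u(k := y)"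
  have u'c: "\<And>i. i < Suc k \<Longrightarrow> u' i \<in> carrier_vec n" using uc yc unfolding u'_def by auto
  have u'k: "u' ` {..<Suc k} \<subseteq> mat_kernel M" using u yk unfolding u'_def by auto
  have "\<not> lindep n (u' ` {..<Suc k})" "inj_on u' {..<Suc k}"
  proof -
    have orth: "conjugate (u' i) \<bullet> u' j = 0" if "i < Suc k" "j < Suc k" "i \<noteq> j" for i j
    proof (cases "i = k")
      case True
      then have "j < k" using that by auto
      have "conjugate (conjugate y \<bullet> u j) = conjugate (u j) \<bullet> y"
        using conjugate_conjugate_sprod[OF yc uc[OF \<open>j < k\<close>]]
          conjugate_vec_sprod_comm[OF yc uc[OF \<open>j < k\<close>]] by simp
      then show ?thesis using True \<open>j < k\<close> yo[OF \<open>j < k\<close>] unfolding u'_def by simp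
    next
      case False
      then have "i < k" using that by auto
      show ?thesis
      proof (cases "j = k")
        case True
        then show ?thesis using False yo[OF \<open>i < k\<close>] unfolding u'_def by simp
      next
        case False
        then show ?thesis using that \<open>i < k\<close> on[of i j] \<open>i \<noteq> k\<close> unfolding u'_def by auto
      qed
    qed
    have nz: "conjugate (u' i) \<bullet> u' i \<noteq> 0" if "i < Suc k" for i
    proof (cases "i = k")
      case True
      have "y \<bullet>c y \<noteq> 0" using conjugate_square_eq_0_vec[OF yc] ynz by simp
      then show ?thesis using True conjugate_vec_sprod_comm[OF yc yc] unfolding u'_def by simp
    next
      case False
      then show ?thesis using that on[of i i] unfolding u'_def by auto
    qed
    show "\<not> lindep n (u' ` {..<Suc k})" by (rule orth_li(2)[OF u'c orth nz])
    show "inj_on u' {..<Suc k}" by (rule orth_li(1)[OF u'c orth nz])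
  qed
  from kernel_li_le[OF M u'k this(1)] this(2) have "Suc k \<le> kernel_dim M"
    by (simp add: card_image)
  with kd show False by simp
qed


lemma sum_min_mono: "l \<le> l' \<Longrightarrow> (\<Sum>d\<leftarrow>ds. min l d) \<le> (\<Sum>d\<leftarrow>ds. min l' (d::nat))"
  by (induct ds) auto

lemma sum_min_0: "(\<Sum>d\<leftarrow>ds. min 0 (d::nat)) = 0"
  by (induct ds) auto

lemma sum_min_big: "sum_list ds \<le> l \<Longrightarrow> (\<Sum>d\<leftarrow>ds. min l (d::nat)) = sum_list ds"
  by (induct ds) auto

lemma sum_min_le: "(\<Sum>d\<leftarrow>ds. min l (d::nat)) \<le> sum_list ds"
  by (induct ds) auto

locale wsetup =
  fixes A :: "complex mat" and n :: nat and lam :: complex and m :: nat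
  assumes A: "A \<in> carrier_mat n n" and m: "m = Polynomial.order lam (char_poly A)"
begin

definition K where "K = A - lam \<cdot>\<^sub>m 1\<^sub>m n"
definition kap where "kap l = kernel_dim (K ^\<^sub>m l)"
definition N where "N l = mat_kernel (K ^\<^sub>m l)"
definition L where "L p = weyr_block A lam p"

lemma K: "K \<in> carrier_mat n n" unfolding K_def by (rule minus_carrier_mat) simp
lemma Kp: "K ^\<^sub>m l \<in> carrier_mat n n" using K by simp

lemma K_char: "K = char_matrix A lam"
  unfolding K_def char_matrix_def using A by (intro eq_matI) auto

lemma kap_formula: "\<exists>ds. (\<forall>l. kap l = (\<Sum>d\<leftarrow>ds. min l d)) \<and> m = sum_list ds"
proof -
  obtain as where "char_poly A = (\<Prod>a\<leftarrow>as. [:- a, 1:])" using char_poly_factorized[OF A] by blast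
  then obtain n_as where jnf: "jordan_nf A n_as" using jordan_nf_exists[OF A] by blast
  let ?ds = "map fst [(d, e)\<leftarrow>n_as . e = lam]"
  have "kap l = (\<Sum>d\<leftarrow>?ds. min l d)" for l
    using dim_gen_eigenspace[OF jnf, of lam l] unfolding dim_gen_eigenspace_def kap_def K_char .
  moreover have "m = sum_list ?ds"
    unfolding m jordan_nf_order[OF jnf] by (induct n_as) auto
  ultimately show ?thesis by blast
qed

lemma kap_mono: "l \<le> l' \<Longrightarrow> kap l \<le> kap l'"
  using kap_formula sum_min_mono by metis

lemma kap_0[simp]: "kap 0 = 0"
  using kap_formula sum_min_0 by metis

lemma kap_big: "m \<le> l \<Longrightarrow> kap l = m"
  using kap_formula sum_min_big by metis

lemma kap_le: "kap l \<le> m"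
  using kap_formula sum_min_le by metis

lemma weyr_eq: "weyr A lam j = kap j - kap (j - 1)"
  unfolding weyr_def kap_def K_def using A by simp

lemma weyr_mu_eq: "weyr_mu A lam l = kap l"
proof (induct l)
  case 0 then show ?case by (simp add: weyr_mu_def)
next
  case (Suc l)
  have "weyr_mu A lam (Suc l) = weyr_mu A lam l + weyr A lam (Suc l)"
    unfolding weyr_mu_def by simp
  also have "\<dots> = kap (Suc l)" using Suc kap_mono[of l "Suc l"] by (simp add: weyr_eq)
  finally show ?case .
qed

lemma L_def': "L p = (LEAST l. p < kap l)"
  unfolding L_def weyr_block_def weyr_mu_eq ..

lemma L_props: assumes p: "p < m"
  shows "1 \<le> L p" "L p \<le> m" "kap (L p - 1) \<le> p" "p < kap (L p)"
proof -
  have ex: "p < kap m" using p kap_big[of m] by simp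
  show lt: "p < kap (L p)" unfolding L_def' by (rule LeastI[of "\<lambda>l. p < kap l", OF ex])
  show "L p \<le> m" unfolding L_def' by (rule Least_le[of "\<lambda>l. p < kap l", OF ex])
  show "1 \<le> L p" using lt by (cases "L p") auto
  show "kap (L p - 1) \<le> p"
  proof (rule ccontr)
    assume "\<not> kap (L p - 1) \<le> p"
    then have "p < kap (L p - 1)" by simp
    then have "L p \<le> L p - 1" unfolding L_def' by (rule Least_le)
    with \<open>1 \<le> L p\<close> show False by simp
  qed
qed

lemma L_unique: assumes "1 \<le> l" "kap (l - 1) \<le> p" "p < kap l"
  shows "L p = l"
  unfolding L_def'
proof (rule Least_equality)
  show "p < kap l" by fact
  fix l' assume "p < kap l'"
  show "l \<le> l'"
  proof (rule ccontr)
    assume "\<not> l \<le> l'"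
    then have "kap l' \<le> kap (l - 1)" by (intro kap_mono) simp
    with assms \<open>p < kap l'\<close> show False by simp
  qed
qed

lemma L_le: "i < kap l \<Longrightarrow> L i \<le> l"
  unfolding L_def' by (rule Least_le)

lemma L_mono: assumes "p \<le> q" "q < m" shows "L p \<le> L q"
  using L_props(4)[OF assms(2)] assms(1) by (intro L_le) simp

lemma Phi_eq: "Phi A lam = {(i,j). i < m \<and> i < j \<and> j < kap (L i)}"
proof safe
  fix i j assume "(i,j) \<in> Phi A lam"
  then obtain l where l: "1 \<le> l" "kap (l - 1) \<le> i" "i < kap l" "i < j" "j < kap l"
    unfolding Phi_def weyr_mu_eq by auto
  have Li: "L i = l" by (rule L_unique) (use l in auto)
  show "i < m" using l kap_le[of l] by simp
  show "i < j" by fact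
  show "j < kap (L i)" using Li l by simp
next
  fix i j assume ij: "i < m" "i < j" "j < kap (L i)"
  note Lp = L_props[OF ij(1)]
  show "(i,j) \<in> Phi A lam"
    unfolding Phi_def weyr_mu_eq weyr_eq
    using Lp ij by (intro CollectI exI[of _ "L i"]) auto
qed

lemma staircase_eq: "staircase A lam m S \<longleftrightarrow> S \<in> carrier_mat m m \<and> (\<forall>p<m. \<forall>q<m. L q \<le> L p \<longrightarrow> S $$ (p,q) = 0)"
  unfolding staircase_def L_def by auto

lemma N_def': "N l = {x. x \<in> carrier_vec n \<and> (K ^\<^sub>m l) *\<^sub>v x = 0\<^sub>v n}"
  unfolding N_def using mat_kernel[OF Kp] by simp

lemma N_carrier: "x \<in> N l \<Longrightarrow> x \<in> carrier_vec n" unfolding N_def' by simp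

lemma N_Suc: "x \<in> N (Suc l) \<longleftrightarrow> x \<in> carrier_vec n \<and> K *\<^sub>v x \<in> N l"
proof -
  have "x \<in> carrier_vec n \<Longrightarrow> (K ^\<^sub>m Suc l) *\<^sub>v x = (K ^\<^sub>m l) *\<^sub>v (K *\<^sub>v x)"
    using K by (simp add: assoc_mult_mat_vec[of _ n n _ n])
  then show ?thesis unfolding N_def' using K by auto
qed

lemma N_0: "N 0 = {0\<^sub>v n}"
  unfolding N_def' using K by auto

lemma N_mono: assumes "l \<le> l'" "x \<in> N l" shows "x \<in> N l'"
  using assms
proof (induct l' arbitrary: l x)
  case 0 then show ?case by simp
next
  case (Suc l')
  show ?case
  proof (cases l)
    case 0
    then have "x = 0\<^sub>v n" using Suc N_0 by auto
    have "K ^\<^sub>m Suc l' *\<^sub>v 0\<^sub>v n = 0\<^sub>v n" by (rule mat_vec_zero[OF Kp])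
    then show ?thesis unfolding N_def' using \<open>x = 0\<^sub>v n\<close> by simp
  next
    case (Suc l0)
    with Suc.prems have "x \<in> carrier_vec n" "K *\<^sub>v x \<in> N l0" "l0 \<le> l'" using N_Suc by auto
    then show ?thesis using Suc.hyps[of l0 "K *\<^sub>v x"] N_Suc by auto
  qed
qed

lemma N_kdim: "kernel_dim (K ^\<^sub>m l) = kap l" unfolding kap_def ..

end


lemma mult_mat_index_sum: "A \<in> carrier_mat nr k \<Longrightarrow> B \<in> carrier_mat k nc \<Longrightarrow> i < nr \<Longrightarrow> j < nc \<Longrightarrow>
  (A * B) $$ (i,j) = (\<Sum>p<k. A $$ (i,p) * B $$ (p,j))"
  by (auto intro!: sum.cong simp: atLeast0LessThan scalar_prod_def)

lemma adj_carrier: "U \<in> carrier_mat n m \<Longrightarrow> mat_adjoint U \<in> carrier_mat m n"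
  unfolding mat_adjoint_def by auto

lemma adj_index: "U \<in> carrier_mat n m \<Longrightarrow> i < m \<Longrightarrow> r < n \<Longrightarrow> mat_adjoint U $$ (i,r) = cnj (U $$ (r,i))"
  unfolding mat_adjoint_def by (auto simp: mat_of_rows_index)

lemma adj_mult_index: fixes U V :: "complex mat" assumes U: "U \<in> carrier_mat n m" and V: "V \<in> carrier_mat n k" and i: "i < m" and j: "j < k"
  shows "(mat_adjoint U * V) $$ (i,j) = conjugate (col U i) \<bullet> col V j"
proof -
  have "(mat_adjoint U * V) $$ (i,j) = (\<Sum>r<n. mat_adjoint U $$ (i,r) * V $$ (r,j))"
    by (rule mult_mat_index_sum[OF adj_carrier[OF U] V i j])
  also have "\<dots> = (\<Sum>r<n. cnj (col U i $ r) * col V j $ r)"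
    using U V i j by (intro sum.cong) (auto simp: adj_index)
  also have "\<dots> = conjugate (col U i) \<bullet> col V j" using U V i j by (subst cip_def[of _ n]) auto
  finally show ?thesis .
qed

context wsetup
begin

definition bcol :: "(nat \<times> nat \<Rightarrow> complex) \<Rightarrow> nat \<Rightarrow> complex vec" where
  "bcol b j = Matrix.vec n (\<lambda>r. b (r,j))"

lemma bcol_carrier[simp]: "bcol b j \<in> carrier_vec n" unfolding bcol_def by simp

lemma good_pair_eq: "good_pair A lam m b U S \<longleftrightarrow>
     U \<in> carrier_mat n m \<and> mat_adjoint U * U = 1\<^sub>m m \<and>
     staircase A lam m S \<and>
     A * U - U * (lam \<cdot>\<^sub>m 1\<^sub>m m + S) = 0\<^sub>m n m \<and>
     (\<forall>i j. i < m \<and> i < j \<and> j < kap (L i) \<longrightarrow> conjugate (col U i) \<bullet> bcol b j = 0)"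
  unfolding good_pair_def Phi_eq bcol_def using A by auto

lemma gp_orth: fixes U :: "complex mat" assumes U: "U \<in> carrier_mat n m" and UU: "mat_adjoint U * U = 1\<^sub>m m"
  and i: "i < m" and j: "j < m"
  shows "conjugate (col U i) \<bullet> col U j = (if i = j then 1 else 0)"
  using adj_mult_index[OF U U i j] UU i j by simp

lemma KU_eq: fixes U S :: "complex mat" assumes U: "U \<in> carrier_mat n m" and S: "S \<in> carrier_mat m m"
  and eq: "A * U - U * (lam \<cdot>\<^sub>m 1\<^sub>m m + S) = 0\<^sub>m n m"
  and q: "q < m"
  shows "K *\<^sub>v col U q = lc n m (\<lambda>p. S $$ (p,q)) (col U)"
proof (rule eq_vecI)
  fix r assume "r < dim_vec (lc n m (\<lambda>p. S $$ (p,q)) (col U))"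
  then have r: "r < n" by simp
  have e: "(A * U) $$ (r,q) - (U * (lam \<cdot>\<^sub>m 1\<^sub>m m + S)) $$ (r,q) = 0"
    using arg_cong[OF eq, of "\<lambda>M. M $$ (r,q)"] r q U S A by simp
  have AU: "(A * U) $$ (r,q) = (\<Sum>j<n. A $$ (r,j) * U $$ (j,q))"
    by (rule mult_mat_index_sum[OF A U r q])
  have "(U * (lam \<cdot>\<^sub>m 1\<^sub>m m + S)) $$ (r,q) = (\<Sum>p<m. U $$ (r,p) * (lam \<cdot>\<^sub>m 1\<^sub>m m + S) $$ (p,q))"
    by (rule mult_mat_index_sum[OF U _ r q]) (use S in simp)
  also have "\<dots> = (\<Sum>p<m. (if p = q then lam * U $$ (r,q) else 0) + U $$ (r,p) * S $$ (p,q))"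
    using S q by (intro sum.cong) (auto simp: distrib_left)
  also have "\<dots> = lam * U $$ (r,q) + (\<Sum>p<m. U $$ (r,p) * S $$ (p,q))"
    using q by (simp add: sum.distrib)
  finally have US: "(U * (lam \<cdot>\<^sub>m 1\<^sub>m m + S)) $$ (r,q) = lam * U $$ (r,q) + (\<Sum>p<m. U $$ (r,p) * S $$ (p,q))" .
  have "(K *\<^sub>v col U q) $ r = (\<Sum>j<n. K $$ (r,j) * col U q $ j)"
    by (rule mult_mat_vec_index_sum[OF K _ r]) (use U q in simp)
  also have "\<dots> = (\<Sum>j<n. A $$ (r,j) * U $$ (j,q) - (if j = r then lam * U $$ (r,q) else 0))"
    using A U q r by (intro sum.cong) (auto simp: K_def left_diff_distrib)
  also have "\<dots> = (\<Sum>j<n. A $$ (r,j) * U $$ (j,q)) - lam * U $$ (r,q)"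
    using r by (simp add: sum_subtractf)
  also have "\<dots> = (\<Sum>p<m. U $$ (r,p) * S $$ (p,q))" using e AU US by simp
  also have "\<dots> = lc n m (\<lambda>p. S $$ (p,q)) (col U) $ r"
    using r U by (auto intro!: sum.cong simp: mult.commute)
  finally show "(K *\<^sub>v col U q) $ r = lc n m (\<lambda>p. S $$ (p,q)) (col U) $ r" .
qed (use K in simp)

lemma N_lc: assumes u: "\<And>i. i < k \<Longrightarrow> u i \<in> carrier_vec n"
  and cN: "\<And>i. i < k \<Longrightarrow> c i \<noteq> 0 \<Longrightarrow> u i \<in> N l"
  shows "lc n k c u \<in> N l"
proof -
  have "K ^\<^sub>m l *\<^sub>v lc n k c u = lc n k c (\<lambda>i. K ^\<^sub>m l *\<^sub>v u i)"
    by (rule mult_lc[OF Kp u])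
  also have "\<dots> = 0\<^sub>v n"
  proof (rule eq_vecI)
    fix r assume "r < dim_vec (0\<^sub>v n :: complex vec)"
    then have r: "r < n" by simp
    have "c i * (K ^\<^sub>m l *\<^sub>v u i) $ r = 0" if "i < k" for i
    proof (cases "c i = 0")
      case False
      then have "K ^\<^sub>m l *\<^sub>v u i = 0\<^sub>v n" using cN[OF that] unfolding N_def' by auto
      then show ?thesis using r by simp
    qed simp
    then have "(\<Sum>i<k. c i * (K ^\<^sub>m l *\<^sub>v u i) $ r) = 0" by (intro sum.neutral) auto
    then show "lc n k c (\<lambda>i. K ^\<^sub>m l *\<^sub>v u i) $ r = 0\<^sub>v n $ r" using r by simp
  qed simp
  finally show ?thesis unfolding N_def' by simp
qed

lemma gp_N: assumes gp: "good_pair A lam m b U S" and q: "q < m"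
  shows "col U q \<in> N (L q)"
  using q
proof (induct q rule: less_induct)
  case (less q)
  from gp have U: "U \<in> carrier_mat n m" and S: "S \<in> carrier_mat m m"
    and eq: "A * U - U * (lam \<cdot>\<^sub>m 1\<^sub>m m + S) = 0\<^sub>m n m"
    and st: "\<forall>p<m. \<forall>q<m. L q \<le> L p \<longrightarrow> S $$ (p,q) = 0"
    unfolding good_pair_eq staircase_eq by auto
  have uc: "col U i \<in> carrier_vec n" if "i < m" for i using U that by simp
  have Kq: "K *\<^sub>v col U q = lc n m (\<lambda>p. S $$ (p,q)) (col U)" by (rule KU_eq[OF U S eq less(2)])
  have "lc n m (\<lambda>p. S $$ (p,q)) (col U) \<in> N (L q - 1)"
  proof (rule N_lc)
    fix p assume p: "p < m" and nz: "S $$ (p,q) \<noteq> 0"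
    then have Lpq: "L p < L q" using st less(2) by force
    then have "p < q" using L_mono[OF _ p] by (metis leI less(2) not_le L_mono)
    then have "col U p \<in> N (L p)" using less(1)[OF _ p] by simp
    then show "col U p \<in> N (L q - 1)" by (rule N_mono[rotated]) (use Lpq in simp)
  qed (use uc in simp)
  then have "col U q \<in> N (Suc (L q - 1))" using N_Suc Kq uc[OF less(2)] by simp
  moreover have "Suc (L q - 1) = L q" using L_props(1)[OF less(2)] by simp
  ultimately show ?case by simp
qed

lemma gp_expand: assumes gp: "good_pair A lam m b U S" and x: "x \<in> N l"
  shows "x = lc n (kap l) (\<lambda>i. conjugate (col U i) \<bullet> x) (col U)"
proof -
  from gp have U: "U \<in> carrier_mat n m" and UU: "mat_adjoint U * U = 1\<^sub>m m"
    unfolding good_pair_eq by auto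
  have km: "kap l \<le> m" by (rule kap_le)
  show ?thesis
  proof (rule kernel_expand[OF Kp])
    fix i assume i: "i < kap l"
    then have "col U i \<in> N (L i)" using gp_N[OF gp] km by simp
    then show "col U i \<in> mat_kernel (K ^\<^sub>m l)" unfolding N_def[symmetric]
      by (rule N_mono[rotated]) (rule L_le[OF i])
  next
    fix i j assume "i < kap l" "j < kap l"
    then show "conjugate (col U i) \<bullet> col U j = (if i = j then 1 else 0)"
      using gp_orth[OF U UU] km by simp
  next
    show "kernel_dim (K ^\<^sub>m l) \<le> kap l" by (simp add: kap_def)
    show "x \<in> mat_kernel (K ^\<^sub>m l)" using x unfolding N_def .
  qed
qed

end


lemma cip_sym: fixes v w :: "complex vec"
  assumes "v \<in> carrier_vec n" "w \<in> carrier_vec n"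
  shows "cnj (conjugate v \<bullet> w) = conjugate w \<bullet> v"
  using conjugate_conjugate_sprod[OF assms(2) assms(1)]
    conjugate_vec_sprod_comm[OF assms(2) assms(1)]
    conjugate_conjugate_sprod[OF assms] conjugate_vec_sprod_comm[OF assms] by simp

lemma lc_ip: fixes w :: "complex vec"
  assumes "w \<in> carrier_vec n" "\<And>i. i < k \<Longrightarrow> u i \<in> carrier_vec n"
  shows "conjugate (lc n k c u) \<bullet> w = (\<Sum>i<k. cnj (c i) * (conjugate (u i) \<bullet> w))"
proof -
  have "conjugate (lc n k c u) \<bullet> w = cnj (conjugate w \<bullet> lc n k c u)"
    using cip_sym[OF assms(1) lc_carrier(1)] by simp
  also have "\<dots> = cnj (\<Sum>i<k. c i * (conjugate w \<bullet> u i))" using ip_lc[OF assms] by simp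
  also have "\<dots> = (\<Sum>i<k. cnj (c i) * (conjugate (u i) \<bullet> w))"
    using cip_sym[OF assms(1) assms(2)] by simp
  finally show ?thesis .
qed

lemma lc_single: assumes "\<And>i. i < e \<Longrightarrow> i \<noteq> k \<Longrightarrow> c i = 0" "k < e" "u k \<in> carrier_vec n"
  shows "lc n e c u = c k \<cdot>\<^sub>v u k"
proof (rule eq_vecI)
  fix r assume "r < dim_vec (c k \<cdot>\<^sub>v u k)"
  then have r: "r < n" using assms by simp
  have "(\<Sum>i<e. c i * u i $ r) = c k * u k $ r"
    using assms by (subst sum.remove[of _ k]) (auto intro!: sum.neutral)
  then show "lc n e c u $ r = (c k \<cdot>\<^sub>v u k) $ r" using r assms by simp
qed (use assms in simp)

lemma sum_split_shift: fixes f :: "nat \<Rightarrow> 'a :: comm_monoid_add" and d s :: nat shows "(\<Sum>i<s + 1 + d. f i) = (\<Sum>i<s + 1. f i) + (\<Sum>t<d. f (s + 1 + t))"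
  by (induct d) (auto simp: add.assoc)

lemma nv_t1: fixes x :: "complex vec"
  assumes x: "x \<in> carrier_vec n" 
  shows "conjugate x \<bullet> x = complex_of_real (\<Sum>r<n. (cmod (x $ r))^2)"
proof -
  have "conjugate x \<bullet> x = (\<Sum>r<n. cnj (x $ r) * x $ r)" using x by (simp add: cip_def)
  also have "\<dots> = (\<Sum>r<n. complex_of_real ((cmod (x $ r))^2))"
    by (intro sum.cong refl) (subst complex_norm_square, simp add: mult.commute)
  also have "\<dots> = complex_of_real (\<Sum>r<n. (cmod (x $ r))^2)" by simp
  finally show ?thesis .
qed

lemma nv_t2: fixes x :: "complex vec"
  assumes x: "x \<in> carrier_vec n" "x \<noteq> 0\<^sub>v n"
  shows "(\<Sum>r<n. (cmod (x $ r))^2) > 0"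
proof -
  obtain r where r: "r < n" "x $ r \<noteq> 0" using x by (metis carrier_vecD eq_vecI index_zero_vec)
  have "(cmod (x $ r))^2 \<le> (\<Sum>r<n. (cmod (x $ r))^2)"
    using r by (intro member_le_sum) auto
  moreover have "(cmod (x $ r))^2 > 0" using r by simp
  ultimately show ?thesis by linarith
qed

lemma nv_t3: fixes x :: "complex vec" and c :: complex
  assumes x: "x \<in> carrier_vec n"
  shows "conjugate (c \<cdot>\<^sub>v x) \<bullet> (c \<cdot>\<^sub>v x) = cnj c * c * (conjugate x \<bullet> x)"
  unfolding conjugate_smult_vec using x by (simp add: mult.assoc)

lemma nv_t4: fixes t :: real assumes "t > 0"
  shows "cnj (complex_of_real (1 / sqrt t)) * complex_of_real (1 / sqrt t) * complex_of_real t = 1"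
proof -
  have sq: "sqrt t * sqrt t = t" using assms by simp
  have "cnj (complex_of_real (1 / sqrt t)) * complex_of_real (1 / sqrt t) * complex_of_real t
     = complex_of_real (1 / sqrt t * (1 / sqrt t) * t)"
    by (simp only: complex_cnj_complex_of_real of_real_mult)
  also have "1 / sqrt t * (1 / sqrt t) * t = t / (sqrt t * sqrt t)" by simp
  also have "\<dots> = 1" using sq assms by simp
  finally show ?thesis by simp
qed

context wsetup
begin

lemma fam_expand: fixes u :: "nat \<Rightarrow> complex vec"
  assumes uN: "\<And>i. i < m \<Longrightarrow> u i \<in> N (L i)"
  and on: "\<And>i j. i < m \<Longrightarrow> j < m \<Longrightarrow> conjugate (u i) \<bullet> u j = (if i = j then 1 else 0)"
  and x: "x \<in> N l"
  shows "x = lc n (kap l) (\<lambda>i. conjugate (u i) \<bullet> x) u"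
proof -
  have km: "kap l \<le> m" by (rule kap_le)
  show ?thesis
  proof (rule kernel_expand[OF Kp])
    fix i assume i: "i < kap l"
    then have "u i \<in> N (L i)" using uN km by simp
    then show "u i \<in> mat_kernel (K ^\<^sub>m l)" unfolding N_def[symmetric]
      by (rule N_mono[rotated]) (rule L_le[OF i])
  next
    fix i j assume "i < kap l" "j < kap l"
    then show "conjugate (u i) \<bullet> u j = (if i = j then 1 else 0)"
      using on km by simp
  next
    show "kernel_dim (K ^\<^sub>m l) \<le> kap l" by (simp add: kap_def)
    show "x \<in> mat_kernel (K ^\<^sub>m l)" using x unfolding N_def .
  qed
qed

definition invp :: "(nat \<times> nat \<Rightarrow> complex) \<Rightarrow> nat \<Rightarrow> (nat \<Rightarrow> complex vec) \<Rightarrow> bool" where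
  "invp b p u \<longleftrightarrow> (\<forall>i<p. u i \<in> N (L i)) \<and>
     (\<forall>i<p. \<forall>j<p. conjugate (u i) \<bullet> u j = (if i = j then 1 else 0)) \<and>
     (\<forall>i<p. \<forall>j. i < j \<and> j < kap (L i) \<longrightarrow> conjugate (u i) \<bullet> bcol b j = 0)"

lemma normalize_vec: fixes x :: "complex vec"
  assumes x: "x \<in> carrier_vec n" "x \<noteq> 0\<^sub>v n"
  shows "\<exists>c. c \<noteq> 0 \<and> conjugate (c \<cdot>\<^sub>v x) \<bullet> (c \<cdot>\<^sub>v x) = 1"
proof -
  define t where "t = (\<Sum>r<n. (cmod (x $ r))^2)"
  have t0: "t > 0" unfolding t_def by (rule nv_t2[OF x])
  define c where "c = complex_of_real (1 / sqrt t)"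
  have "conjugate (c \<cdot>\<^sub>v x) \<bullet> (c \<cdot>\<^sub>v x) = cnj c * c * complex_of_real t"
    unfolding nv_t3[OF x(1)] nv_t1[OF x(1)] t_def ..
  also have "\<dots> = 1" unfolding c_def by (rule nv_t4[OF t0])
  finally have e: "conjugate (c \<cdot>\<^sub>v x) \<bullet> (c \<cdot>\<^sub>v x) = 1" .
  have "c \<noteq> 0" unfolding c_def using t0 by simp
  then show ?thesis using e by blast
qed

lemma inv_step: assumes invp: "invp b p u" and p: "p < m"
  shows "\<exists>w. invp b (Suc p) (u(p := w))"
proof -
  let ?l = "L p"
  let ?e = "kap ?l"
  have pe: "p < ?e" by (rule L_props(4)[OF p])
  define v where "v i = (if i < p then u i else bcol b (i + 1))" for i
  have vc: "v i \<in> carrier_vec n" if "i < ?e - 1" for i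
    using invp N_carrier that unfolding v_def invp_def by auto
  have r: "?e - 1 < kernel_dim (K ^\<^sub>m ?l)" using pe by (simp add: kap_def)
  have "\<exists>x. x \<in> mat_kernel (K ^\<^sub>m ?l) \<and> x \<noteq> 0\<^sub>v n \<and> (\<forall>i<?e - 1. conjugate (v i) \<bullet> x = 0)"
    by (rule kernel_orth_exists[OF Kp _ r]) (rule vc)
  then obtain x where x: "x \<in> mat_kernel (K ^\<^sub>m ?l)" "x \<noteq> 0\<^sub>v n" "\<forall>i<?e - 1. conjugate (v i) \<bullet> x = 0"
    by blast
  have xN: "x \<in> N ?l" using x(1) unfolding N_def .
  have xc: "x \<in> carrier_vec n" using N_carrier[OF xN] .
  obtain c where c: "c \<noteq> 0" "conjugate (c \<cdot>\<^sub>v x) \<bullet> (c \<cdot>\<^sub>v x) = 1"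
    using normalize_vec[OF xc x(2)] by blast
  define w where "w = c \<cdot>\<^sub>v x"
  have wc: "w \<in> carrier_vec n" unfolding w_def using xc by simp
  have wN: "w \<in> N ?l" unfolding w_def N_def using mat_kernel_smult[OF Kp x(1)] .
  have uc: "u i \<in> carrier_vec n" if "i < p" for i using invp N_carrier that unfolding invp_def by auto
  have ow: "conjugate (u i) \<bullet> w = 0" if "i < p" for i
  proof -
    have "i < ?e - 1" using that pe by simp
    then have "conjugate (v i) \<bullet> x = 0" using x(3) by blast
    then have "conjugate (u i) \<bullet> x = 0" using that unfolding v_def by simp
    then show ?thesis unfolding w_def using xc uc[OF that] by simp
  qed
  have wo: "conjugate w \<bullet> u i = 0" if "i < p" for i
    using cip_sym[OF uc[OF that] wc] ow[OF that] by simp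
  have wb: "conjugate w \<bullet> bcol b j = 0" if "p < j" "j < ?e" for j
  proof -
    have "j - 1 < ?e - 1" using that by simp
    then have "conjugate (v (j - 1)) \<bullet> x = 0" using x(3) by blast
    moreover have "\<not> (j - 1 < p)" using that by simp
    then have "v (j - 1) = bcol b j" using that unfolding v_def by simp
    ultimately have "conjugate (bcol b j) \<bullet> x = 0" by simp
    then have "conjugate x \<bullet> bcol b j = 0" using cip_sym[OF bcol_carrier xc, of b j] by simp
    then show ?thesis unfolding w_def conjugate_smult_vec using xc
      by (subst smult_scalar_prod_distrib[of _ n]) auto
  qed
  have iN: "\<And>i. i < p \<Longrightarrow> u i \<in> N (L i)"
    and ion: "\<And>i j. i < p \<Longrightarrow> j < p \<Longrightarrow> conjugate (u i) \<bullet> u j = (if i = j then 1 else 0)"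
    and ib: "\<And>i j. i < p \<Longrightarrow> i < j \<Longrightarrow> j < kap (L i) \<Longrightarrow> conjugate (u i) \<bullet> bcol b j = 0"
    using invp unfolding invp_def by blast+
  have ww: "conjugate w \<bullet> w = 1" using c(2) unfolding w_def .
  show ?thesis
  proof (intro exI[of _ w])
    show "invp b (Suc p) (u(p := w))"
      unfolding invp_def
    proof (intro conjI allI impI)
      fix i assume "i < Suc p"
      then show "(u(p := w)) i \<in> N (L i)" using iN wN by (cases "i = p") auto
    next
      fix i j assume i: "i < Suc p" and j: "j < Suc p"
      show "conjugate ((u(p := w)) i) \<bullet> (u(p := w)) j = (if i = j then 1 else 0)"
      proof (cases "i = p")
        case True
        show ?thesis
        proof (cases "j = p")
          case True
          then show ?thesis using \<open>i = p\<close> ww by simp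
        next
          case False
          then have "j < p" using j by simp
          then show ?thesis using \<open>i = p\<close> False wo by simp
        qed
      next
        case False
        then have "i < p" using i by simp
        show ?thesis
        proof (cases "j = p")
          case True
          then show ?thesis using \<open>i < p\<close> False ow by simp
        next
          case False
          then have "j < p" using j by simp
          then show ?thesis using \<open>i < p\<close> \<open>i \<noteq> p\<close> False ion by simp
        qed
      qed
    next
      fix i j assume i: "i < Suc p" and ij: "i < j \<and> j < kap (L i)"
      show "conjugate ((u(p := w)) i) \<bullet> bcol b j = 0"
      proof (cases "i = p")
        case True
        then show ?thesis using wb ij by simp
      next
        case False
        then show ?thesis using ib i ij by simp
      qed
    qed
  qed
qed

lemma inv_ex: "p \<le> m \<Longrightarrow> \<exists>u. invp b p u"
proof (induct p)
  case 0 then show ?case by (simp add: invp_def)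
next
  case (Suc p)
  then obtain u where "invp b p u" by auto
  with inv_step[OF this] Suc(2) show ?case by auto
qed

lemma KU_entry: fixes U S :: "complex mat" assumes U: "U \<in> carrier_mat n m" and S: "S \<in> carrier_mat m m"
  and r: "r < n" and q: "q < m"
  shows "(A * U - U * (lam \<cdot>\<^sub>m 1\<^sub>m m + S)) $$ (r,q) = (K *\<^sub>v col U q) $ r - lc n m (\<lambda>p. S $$ (p,q)) (col U) $ r"
proof -
  have AU: "(A * U) $$ (r,q) = (\<Sum>j<n. A $$ (r,j) * U $$ (j,q))"
    by (rule mult_mat_index_sum[OF A U r q])
  have "(U * (lam \<cdot>\<^sub>m 1\<^sub>m m + S)) $$ (r,q) = (\<Sum>p<m. U $$ (r,p) * (lam \<cdot>\<^sub>m 1\<^sub>m m + S) $$ (p,q))"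
    by (rule mult_mat_index_sum[OF U _ r q]) (use S in simp)
  also have "\<dots> = (\<Sum>p<m. (if p = q then lam * U $$ (r,q) else 0) + U $$ (r,p) * S $$ (p,q))"
    using S q by (intro sum.cong) (auto simp: distrib_left)
  also have "\<dots> = lam * U $$ (r,q) + (\<Sum>p<m. U $$ (r,p) * S $$ (p,q))"
    using q by (simp add: sum.distrib)
  finally have US: "(U * (lam \<cdot>\<^sub>m 1\<^sub>m m + S)) $$ (r,q) = lam * U $$ (r,q) + (\<Sum>p<m. U $$ (r,p) * S $$ (p,q))" .
  have "(K *\<^sub>v col U q) $ r = (\<Sum>j<n. K $$ (r,j) * col U q $ j)"
    by (rule mult_mat_vec_index_sum[OF K _ r]) (use U q in simp)
  also have "\<dots> = (\<Sum>j<n. A $$ (r,j) * U $$ (j,q) - (if j = r then lam * U $$ (r,q) else 0))"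
    using A U q r by (intro sum.cong) (auto simp: K_def left_diff_distrib)
  also have "\<dots> = (\<Sum>j<n. A $$ (r,j) * U $$ (j,q)) - lam * U $$ (r,q)"
    using r by (simp add: sum_subtractf)
  finally have KU: "(K *\<^sub>v col U q) $ r = (\<Sum>j<n. A $$ (r,j) * U $$ (j,q)) - lam * U $$ (r,q)" .
  have lcU: "lc n m (\<lambda>p. S $$ (p,q)) (col U) $ r = (\<Sum>p<m. U $$ (r,p) * S $$ (p,q))"
    using r U by (auto intro!: sum.cong simp: mult.commute)
  have d: "(A * U - U * (lam \<cdot>\<^sub>m 1\<^sub>m m + S)) $$ (r,q) = (A * U) $$ (r,q) - (U * (lam \<cdot>\<^sub>m 1\<^sub>m m + S)) $$ (r,q)"
    using A U S r q by simp
  show ?thesis unfolding d AU US KU lcU by simp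
qed

lemma exists_good: "\<exists>U S. good_pair A lam m b U S"
proof -
  obtain u where invp: "invp b m u" using inv_ex[of m] by auto
  have uN: "\<And>i. i < m \<Longrightarrow> u i \<in> N (L i)"
   and on: "\<And>i j. i < m \<Longrightarrow> j < m \<Longrightarrow> conjugate (u i) \<bullet> u j = (if i = j then 1 else 0)"
   and ub: "\<And>i j. i < m \<Longrightarrow> i < j \<Longrightarrow> j < kap (L i) \<Longrightarrow> conjugate (u i) \<bullet> bcol b j = 0"
    using invp unfolding invp_def by auto
  have uc: "\<And>i. i < m \<Longrightarrow> u i \<in> carrier_vec n" using uN N_carrier by blast
  define U where "U = Matrix.mat n m (\<lambda>(r,i). u i $ r)"
  have U: "U \<in> carrier_mat n m" unfolding U_def by simp
  have colU: "col U i = u i" if "i < m" for i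
    using uc[OF that] that unfolding U_def by (intro eq_vecI) auto
  define S where "S = mat_adjoint U * (K * U)"
  have S: "S \<in> carrier_mat m m" unfolding S_def using adj_carrier[OF U] K U by simp
  have Sidx: "S $$ (p,q) = conjugate (u p) \<bullet> (K *\<^sub>v u q)" if "p < m" "q < m" for p q
  proof -
    have "S $$ (p,q) = conjugate (col U p) \<bullet> col (K * U) q"
      unfolding S_def by (rule adj_mult_index[OF U _ that]) (use K U in simp)
    also have "col (K * U) q = K *\<^sub>v col U q" using K U that by (auto intro!: eq_vecI)
    finally show ?thesis using colU that by simp
  qed
  have KuN: "K *\<^sub>v u q \<in> N (L q - 1)" if "q < m" for q
  proof -
    have "u q \<in> N (Suc (L q - 1))" using uN[OF that] L_props(1)[OF that] by simp
    then show ?thesis using N_Suc by simp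
  qed
  have UU: "mat_adjoint U * U = 1\<^sub>m m"
  proof (rule eq_matI)
    fix i j assume "i < dim_row (1\<^sub>m m :: complex mat)" "j < dim_col (1\<^sub>m m :: complex mat)"
    then show "(mat_adjoint U * U) $$ (i,j) = 1\<^sub>m m $$ (i,j)"
      using adj_mult_index[OF U U, of i j] colU on by simp
  qed (use adj_carrier[OF U] U in auto)
  have st: "staircase A lam m S"
    unfolding staircase_eq
  proof (intro conjI S allI impI)
    fix p q assume p: "p < m" and q: "q < m" and Lqp: "L q \<le> L p"
    let ?l = "L q - 1"
    have ex: "K *\<^sub>v u q = lc n (kap ?l) (\<lambda>i. conjugate (u i) \<bullet> (K *\<^sub>v u q)) u"
      by (rule fam_expand[OF uN on KuN[OF q]])
    have "kap ?l \<le> kap (L p - 1)" using Lqp by (intro kap_mono) simp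
    also have "\<dots> \<le> p" by (rule L_props(3)[OF p])
    finally have lp: "kap ?l \<le> p" .
    have klm: "kap ?l \<le> m" by (rule kap_le)
    have "conjugate (u p) \<bullet> (K *\<^sub>v u q) = (\<Sum>i<kap ?l. (conjugate (u i) \<bullet> (K *\<^sub>v u q)) * (conjugate (u p) \<bullet> u i))"
      by (subst ex, rule ip_lc) (use uc p klm in auto)
    also have "\<dots> = 0" using on p lp klm by (intro sum.neutral) auto
    finally show "S $$ (p,q) = 0" using Sidx[OF p q] by simp
  qed
  have eq: "A * U - U * (lam \<cdot>\<^sub>m 1\<^sub>m m + S) = 0\<^sub>m n m"
  proof (rule eq_matI)
    fix r q assume r: "r < dim_row (0\<^sub>m n m :: complex mat)" and q: "q < dim_col (0\<^sub>m n m :: complex mat)"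
    then have r: "r < n" and q: "q < m" by auto
    have KN: "K *\<^sub>v u q \<in> N m" using KuN[OF q] by (rule N_mono[rotated]) (use L_props(2)[OF q] in simp)
    have "K *\<^sub>v u q = lc n (kap m) (\<lambda>i. conjugate (u i) \<bullet> (K *\<^sub>v u q)) u"
      by (rule fam_expand[OF uN on KN])
    also have "\<dots> = lc n m (\<lambda>p. S $$ (p,q)) (col U)"
      unfolding kap_big[OF le_refl] lc_def
      by (rule arg_cong[where f="Matrix.vec n"], rule ext, rule sum.cong) (auto simp: Sidx[OF _ q] colU)
    finally have e: "K *\<^sub>v col U q = lc n m (\<lambda>p. S $$ (p,q)) (col U)" using colU q by simp
    show "(A * U - U * (lam \<cdot>\<^sub>m 1\<^sub>m m + S)) $$ (r,q) = 0\<^sub>m n m $$ (r,q)"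
      using KU_entry[OF U S r q] e r q by simp
  qed (use U S A in auto)
  have "good_pair A lam m b U S"
    unfolding good_pair_eq
  proof (intro conjI U UU st eq allI impI)
    fix i j assume "i < m \<and> i < j \<and> j < kap (L i)"
    then show "conjugate (col U i) \<bullet> bcol b j = 0" using ub colU by simp
  qed
  then show ?thesis by blast
qed

end


lemma cnj_mult_one: "cnj a * a = 1 \<Longrightarrow> cmod a = 1"
proof -
  assume h: "cnj a * a = 1"
  have "complex_of_real ((cmod a)^2) = a * cnj a" by (rule complex_norm_square)
  also have "\<dots> = 1" using h by (simp add: mult.commute)
  finally have "(cmod a)^2 = 1" by (metis of_real_eq_1_iff)
  then show "cmod a = 1" using norm_ge_zero[of a] by (auto simp: power2_eq_1_iff)
qed

context wsetup
begin

lemma gp_KU: fixes U S :: "complex mat" assumes gp: "good_pair A lam m b U S" and q: "q < m"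
  shows "K *\<^sub>v col U q = lc n m (\<lambda>p. S $$ (p,q)) (col U)"
proof -
  from gp have U: "U \<in> carrier_mat n m" and S: "S \<in> carrier_mat m m"
    and eq: "A * U - U * (lam \<cdot>\<^sub>m 1\<^sub>m m + S) = 0\<^sub>m n m"
    unfolding good_pair_eq staircase_eq by auto
  show ?thesis by (rule KU_eq[OF U S eq q])
qed

lemma gp_S: fixes U S :: "complex mat" assumes gp: "good_pair A lam m b U S"
  shows "S = mat_adjoint U * (A - lam \<cdot>\<^sub>m 1\<^sub>m n) * U"
proof -
  from gp have U: "U \<in> carrier_mat n m" and S: "S \<in> carrier_mat m m"
    and UU: "mat_adjoint U * U = 1\<^sub>m m"
    unfolding good_pair_eq staircase_eq by auto
  have "mat_adjoint U * (A - lam \<cdot>\<^sub>m 1\<^sub>m n) * U = mat_adjoint U * (K * U)"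
    unfolding K_def[symmetric] using adj_carrier[OF U] K U by simp
  also have "\<dots> = S"
  proof (rule eq_matI)
    fix p q assume "p < dim_row S" "q < dim_col S"
    then have p: "p < m" and q: "q < m" using S by auto
    have "(mat_adjoint U * (K * U)) $$ (p,q) = conjugate (col U p) \<bullet> col (K * U) q"
      by (rule adj_mult_index[OF U _ p q]) (use K U in simp)
    also have "col (K * U) q = K *\<^sub>v col U q" using K U q by (auto intro!: eq_vecI)
    also have "\<dots> = lc n m (\<lambda>p. S $$ (p,q)) (col U)" by (rule gp_KU[OF gp q])
    also have "conjugate (col U p) \<bullet> \<dots> = (\<Sum>i<m. S $$ (i,q) * (conjugate (col U p) \<bullet> col U i))"
      by (rule ip_lc) (use U p in auto)
    also have "\<dots> = (\<Sum>i<m. if i = p then S $$ (p,q) else 0)"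
      by (intro sum.cong refl) (use gp_orth[OF U UU p] in auto)
    also have "\<dots> = S $$ (p,q)" using p by simp
    finally show "(mat_adjoint U * (K * U)) $$ (p,q) = S $$ (p,q)" .
  qed (use adj_carrier[OF U] K U S in auto)
  finally show ?thesis by simp
qed

definition Z :: "complex mat" where "Z = (SOME Z. \<exists>S. good_pair A lam m (\<lambda>_. 0) Z S)"

lemma Z_good: "\<exists>S. good_pair A lam m (\<lambda>_. 0) Z S"
  unfolding Z_def by (rule someI_ex) (rule exists_good)

definition dd :: "nat \<Rightarrow> nat" where "dd l = kap l - kap (l - 1) - 1"

definition Cm :: "(nat \<times> nat \<Rightarrow> complex) \<Rightarrow> nat \<Rightarrow> complex mat" where
  "Cm b l = Matrix.mat (dd l) (dd l) (\<lambda>(a,c). conjugate (col Z (kap (l - 1) + 1 + a)) \<bullet> bcol b (kap (l - 1) + 1 + c))"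

definition F :: "(nat \<times> nat \<Rightarrow> complex) \<Rightarrow> complex" where
  "F b = (\<Prod>l\<in>{1..m}. Determinant.det (Cm b l))"

lemma diag_nz: fixes U S :: "complex mat"
  assumes Fb: "F b \<noteq> 0" and gp: "good_pair A lam m b U S" and j: "j < m" and jL: "kap (L j - 1) < j"
  shows "conjugate (col U j) \<bullet> bcol b j \<noteq> 0"
proof
  assume E0: "conjugate (col U j) \<bullet> bcol b j = 0"
  define l where "l = L j"
  define s where "s = kap (l - 1)"
  define e where "e = kap l"
  define d where "d = dd l"
  have l1: "1 \<le> l" and lm: "l \<le> m" using L_props[OF j] unfolding l_def by auto
  have sj: "s < j" using jL unfolding s_def l_def .
  have je: "j < e" using L_props(4)[OF j] unfolding e_def l_def .
  have em: "e \<le> m" unfolding e_def by (rule kap_le)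
  have ed: "e = s + 1 + d" unfolding d_def dd_def e_def[symmetric] s_def[symmetric] using sj je by simp
  have Lin: "L i = l" if "s \<le> i" "i < e" for i
    by (rule L_unique) (use l1 that in \<open>auto simp: s_def e_def\<close>)
  obtain SZ where gZ: "good_pair A lam m (\<lambda>_. 0) Z SZ" using Z_good by blast
  from gp have U: "U \<in> carrier_mat n m" and UU: "mat_adjoint U * U = 1\<^sub>m m"
    and Ub: "\<And>i j. i < m \<Longrightarrow> i < j \<Longrightarrow> j < kap (L i) \<Longrightarrow> conjugate (col U i) \<bullet> bcol b j = 0"
    unfolding good_pair_eq by auto
  from gZ have Zc: "Z \<in> carrier_mat n m" and ZZ: "mat_adjoint Z * Z = 1\<^sub>m m"
    unfolding good_pair_eq by auto
  let ?u = "col U" and ?z = "col Z"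
  have uN: "\<And>i. i < m \<Longrightarrow> ?u i \<in> N (L i)" using gp_N[OF gp] .
  have zN: "\<And>i. i < m \<Longrightarrow> ?z i \<in> N (L i)" using gp_N[OF gZ] .
  have uon: "\<And>i j. i < m \<Longrightarrow> j < m \<Longrightarrow> conjugate (?u i) \<bullet> ?u j = (if i = j then 1 else 0)"
    using gp_orth[OF U UU] .
  have zon: "\<And>i j. i < m \<Longrightarrow> j < m \<Longrightarrow> conjugate (?z i) \<bullet> ?z j = (if i = j then 1 else 0)"
    using gp_orth[OF Zc ZZ] .
  have uc: "\<And>i. i < m \<Longrightarrow> ?u i \<in> carrier_vec n" using U by simp
  have zc: "\<And>i. i < m \<Longrightarrow> ?z i \<in> carrier_vec n" using Zc by simp
  have FB: "conjugate (?z k) \<bullet> ?u i = 0" if k: "s \<le> k" "k < m" and i: "i < s" for k i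
  proof -
    have im: "i < m" using i sj j by simp
    have "?u i \<in> N (L i)" by (rule uN[OF im])
    then have uiN: "?u i \<in> N (l - 1)" by (rule N_mono[rotated]) (use L_le[of i "l - 1"] i in \<open>simp add: s_def\<close>)
    have ex: "?u i = lc n s (\<lambda>t. conjugate (?z t) \<bullet> ?u i) ?z"
      unfolding s_def by (rule fam_expand[OF zN zon uiN])
    have sm: "s \<le> m" unfolding s_def by (rule kap_le)
    have "conjugate (?z k) \<bullet> lc n s (\<lambda>t. conjugate (?z t) \<bullet> ?u i) ?z
       = (\<Sum>t<s. (conjugate (?z t) \<bullet> ?u i) * (conjugate (?z k) \<bullet> ?z t))"
      by (rule ip_lc) (use zc k sm in auto)
    also have "\<dots> = 0" using zon k sm by (intro sum.neutral) auto
    finally show ?thesis using ex by simp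
  qed
  have Ls: "L s = l" using Lin[of s] sj je by simp
  have FC: "conjugate (?u s) \<bullet> bcol b jj = 0" if "s < jj" "jj < e" for jj
    by (rule Ub) (use that sj j em in \<open>auto simp: Ls e_def\<close>)
  have FD: "conjugate (?u (s + 1 + i)) \<bullet> bcol b (s + 1 + c) = 0" if "i < c" "c < d" for i c
  proof -
    have "L (s + 1 + i) = l" using Lin[of "s + 1 + i"] that ed by simp
    then show ?thesis by (intro Ub) (use that ed em in \<open>auto simp: e_def\<close>)
  qed
  define Y where "Y = Matrix.mat d d (\<lambda>(a,i). conjugate (?z (s + 1 + a)) \<bullet> ?u (s + 1 + i))"
  define T where "T = Matrix.mat d d (\<lambda>(i,c). conjugate (?u (s + 1 + i)) \<bullet> bcol b (s + 1 + c))"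
  have Y: "Y \<in> carrier_mat d d" and T: "T \<in> carrier_mat d d" unfolding Y_def T_def by auto
  have Cmeq: "Cm b l = Y * T"
  proof (rule eq_matI)
    fix a c assume "a < dim_row (Y * T)" "c < dim_col (Y * T)"
    then have a: "a < d" and c: "c < d" using Y T by auto
    define k where "k = s + 1 + a"
    define jj where "jj = s + 1 + c"
    have km: "k < e" "s \<le> k" using a ed unfolding k_def by auto
    have jje: "jj < e" "s < jj" using c ed unfolding jj_def by auto
    have "?z k \<in> N (L k)" using zN km em by simp
    then have zkN: "?z k \<in> N l" using Lin[of k] km by simp
    have ex: "?z k = lc n e (\<lambda>i. conjugate (?u i) \<bullet> ?z k) ?u"
      unfolding e_def by (rule fam_expand[OF uN uon zkN])
    have "conjugate (?z k) \<bullet> bcol b jj = (\<Sum>i<e. cnj (conjugate (?u i) \<bullet> ?z k) * (conjugate (?u i) \<bullet> bcol b jj))"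
      by (subst ex, rule lc_ip) (use uc em in auto)
    also have "\<dots> = (\<Sum>i<e. (conjugate (?z k) \<bullet> ?u i) * (conjugate (?u i) \<bullet> bcol b jj))"
    proof (intro sum.cong refl)
      fix i assume "i \<in> {..<e}"
      then have im: "i < m" using em by auto
      have kmm: "k < m" using km em by simp
      show "cnj (conjugate (?u i) \<bullet> ?z k) * (conjugate (?u i) \<bullet> bcol b jj) =
          (conjugate (?z k) \<bullet> ?u i) * (conjugate (?u i) \<bullet> bcol b jj)"
        using cip_sym[OF uc[OF im] zc[OF kmm]] by simp
    qed
    also have "\<dots> = (\<Sum>i<s + 1. (conjugate (?z k) \<bullet> ?u i) * (conjugate (?u i) \<bullet> bcol b jj))
        + (\<Sum>t<d. (conjugate (?z k) \<bullet> ?u (s + 1 + t)) * (conjugate (?u (s + 1 + t)) \<bullet> bcol b jj))"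
      unfolding ed by (rule sum_split_shift)
    also have "(\<Sum>i<s + 1. (conjugate (?z k) \<bullet> ?u i) * (conjugate (?u i) \<bullet> bcol b jj)) = 0"
    proof (rule sum.neutral, intro ballI)
      fix i assume "i \<in> {..<s + 1}"
      then have "i < s \<or> i = s" by auto
      then show "(conjugate (?z k) \<bullet> ?u i) * (conjugate (?u i) \<bullet> bcol b jj) = 0"
      proof
        assume "i < s"
        then show ?thesis using FB[of k i] km em by simp
      next
        assume "i = s"
        then show ?thesis using FC[OF jje(2) jje(1)] by simp
      qed
    qed
    also have "(\<Sum>t<d. (conjugate (?z k) \<bullet> ?u (s + 1 + t)) * (conjugate (?u (s + 1 + t)) \<bullet> bcol b jj))
       = (\<Sum>t<d. Y $$ (a,t) * T $$ (t,c))"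
      using a c unfolding Y_def T_def k_def jj_def by (intro sum.cong refl) auto
    also have "\<dots> = (Y * T) $$ (a,c)" by (rule mult_mat_index_sum[OF Y T a c, symmetric])
    finally show "Cm b l $$ (a,c) = (Y * T) $$ (a,c)"
      using a c unfolding Cm_def d_def[symmetric] s_def[symmetric] k_def jj_def by simp
  qed (use Y T in \<open>auto simp: Cm_def d_def\<close>)
  have "Determinant.det T = prod_list (diag_mat T)"
    by (rule det_lower_triangular[OF _ T]) (use FD in \<open>auto simp: T_def\<close>)
  also have "\<dots> = (\<Prod>i = 0..<d. T $$ (i,i))" using T by (simp add: prod_list_diag_prod)
  also have "\<dots> = 0"
  proof (rule prod_zero)
    show "finite {0..<d}" by simp
    have jd: "j - s - 1 < d" using sj je ed by simp
    have "T $$ (j - s - 1, j - s - 1) = 0" using jd sj E0 unfolding T_def by simp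
    then show "\<exists>i\<in>{0..<d}. T $$ (i,i) = 0" using jd by auto
  qed
  finally have "Determinant.det (Cm b l) = 0" unfolding Cmeq det_mult[OF Y T] by simp
  moreover have "l \<in> {1..m}" using l1 lm by simp
  ultimately have "F b = 0" unfolding F_def by (intro prod_zero) auto
  with Fb show False by simp
qed

lemma unique_U: fixes U S U' S' :: "complex mat"
  assumes D: "\<And>j. j < m \<Longrightarrow> kap (L j - 1) < j \<Longrightarrow> conjugate (col U j) \<bullet> bcol b j \<noteq> 0"
    and gp: "good_pair A lam m b U S" and gp': "good_pair A lam m b U' S'"
    and k: "k < m"
  shows "col U' k = (conjugate (col U k) \<bullet> col U' k) \<cdot>\<^sub>v col U k"
  using k
proof (induct k rule: less_induct)
  case (less k)
  let ?u = "col U" and ?u' = "col U'"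
  from gp have U: "U \<in> carrier_mat n m" and UU: "mat_adjoint U * U = 1\<^sub>m m"
    and Ub: "\<And>i j. i < m \<Longrightarrow> i < j \<Longrightarrow> j < kap (L i) \<Longrightarrow> conjugate (col U i) \<bullet> bcol b j = 0"
    unfolding good_pair_eq by auto
  from gp' have U': "U' \<in> carrier_mat n m" and UU': "mat_adjoint U' * U' = 1\<^sub>m m"
    and Ub': "\<And>i j. i < m \<Longrightarrow> i < j \<Longrightarrow> j < kap (L i) \<Longrightarrow> conjugate (col U' i) \<bullet> bcol b j = 0"
    unfolding good_pair_eq by auto
  have uN: "\<And>i. i < m \<Longrightarrow> ?u i \<in> N (L i)" using gp_N[OF gp] .
  have uon: "\<And>i j. i < m \<Longrightarrow> j < m \<Longrightarrow> conjugate (?u i) \<bullet> ?u j = (if i = j then 1 else 0)"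
    using gp_orth[OF U UU] .
  have u'on: "\<And>i j. i < m \<Longrightarrow> j < m \<Longrightarrow> conjugate (?u' i) \<bullet> ?u' j = (if i = j then 1 else 0)"
    using gp_orth[OF U' UU'] .
  have uc: "\<And>i. i < m \<Longrightarrow> ?u i \<in> carrier_vec n" using U by simp
  have u'c: "\<And>i. i < m \<Longrightarrow> ?u' i \<in> carrier_vec n" using U' by simp
  define l where "l = L k"
  define s where "s = kap (l - 1)"
  define e where "e = kap l"
  have l1: "1 \<le> l" using L_props[OF less(2)] unfolding l_def by auto
  have sk: "s \<le> k" using L_props(3)[OF less(2)] unfolding s_def l_def .
  have ke: "k < e" using L_props(4)[OF less(2)] unfolding e_def l_def .
  have em: "e \<le> m" unfolding e_def by (rule kap_le)
  have Lin: "L i = l" if "s \<le> i" "i < e" for i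
    by (rule L_unique) (use l1 that in \<open>auto simp: s_def e_def\<close>)
  define a where "a i = conjugate (?u i) \<bullet> ?u' k" for i
  have u'kN: "?u' k \<in> N l" using gp_N[OF gp' less(2)] unfolding l_def .
  have ex: "?u' k = lc n e a ?u" unfolding e_def a_def by (rule fam_expand[OF uN uon u'kN])
  have below: "a i = 0" if i: "i < k" for i
  proof -
    have im: "i < m" using i less(2) by simp
    define al where "al = conjugate (?u i) \<bullet> ?u' i"
    have IH: "?u' i = al \<cdot>\<^sub>v ?u i" unfolding al_def by (rule less(1)[OF i im])
    have "conjugate (?u' i) \<bullet> ?u' k = 0" using u'on[OF im less(2)] i by simp
    moreover have "conjugate (?u' i) \<bullet> ?u' k = cnj al * a i" unfolding a_def
      by (subst IH, unfold conjugate_smult_vec, subst smult_scalar_prod_distrib[of _ n]) (use uc[OF im] u'c[OF less(2)] in auto)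
    ultimately have "cnj al * a i = 0" by simp
    moreover have "al \<noteq> 0"
    proof
      assume "al = 0"
      then have "?u' i = 0 \<cdot>\<^sub>v ?u i" using IH by simp
      also have "\<dots> = 0\<^sub>v n" using uc[OF im] U by (intro eq_vecI) auto
      finally have "?u' i = 0\<^sub>v n" .
      then show False using u'on[OF im im] by simp
    qed
    ultimately show ?thesis by simp
  qed
  have above: "a i = 0" if "k < i" "i < e" for i
    using that
  proof (induct "e - i" arbitrary: i rule: less_induct)
    case (less i)
    have im: "i < m" using less(3) em by simp
    have c1: "conjugate (?u' k) \<bullet> bcol b i = 0"
      by (rule Ub'[OF \<open>k < m\<close> less(2)]) (use Lin[of k] sk ke less(3) in \<open>simp add: l_def e_def\<close>)
    have "conjugate (?u' k) \<bullet> bcol b i = (\<Sum>i'<e. cnj (a i') * (conjugate (?u i') \<bullet> bcol b i))"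
      by (subst ex, rule lc_ip) (use uc em in auto)
    also have "\<dots> = cnj (a i) * (conjugate (?u i) \<bullet> bcol b i)"
    proof -
      have "(\<Sum>i'<e. cnj (a i') * (conjugate (?u i') \<bullet> bcol b i)) =
         cnj (a i) * (conjugate (?u i) \<bullet> bcol b i) + (\<Sum>i'\<in>{..<e} - {i}. cnj (a i') * (conjugate (?u i') \<bullet> bcol b i))"
        using less(3) by (subst sum.remove[of _ i]) auto
      also have "(\<Sum>i'\<in>{..<e} - {i}. cnj (a i') * (conjugate (?u i') \<bullet> bcol b i)) = 0"
      proof (rule sum.neutral, intro ballI)
        fix i' assume i': "i' \<in> {..<e} - {i}"
        show "cnj (a i') * (conjugate (?u i') \<bullet> bcol b i) = 0"
        proof (cases "i' < k")
          case True then show ?thesis using below by simp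
        next
          case False
          show ?thesis
          proof (cases "i' < i")
            case True
            have "conjugate (?u i') \<bullet> bcol b i = 0"
              by (rule Ub) (use True False i' em less(3) Lin[of i'] sk in \<open>auto simp: e_def\<close>)
            then show ?thesis by simp
          next
            case False
            then have "i < i'" "i' < e" using i' by auto
            then have "a i' = 0" using less(1)[of i'] less(2) by simp
            then show ?thesis by simp
          qed
        qed
      qed
      finally show ?thesis by simp
    qed
    finally have "cnj (a i) * (conjugate (?u i) \<bullet> bcol b i) = 0" using c1 by simp
    moreover have "conjugate (?u i) \<bullet> bcol b i \<noteq> 0"
      by (rule D[OF im]) (use Lin[of i] sk less(2) less(3) in \<open>simp add: s_def\<close>)
    ultimately show ?case by simp
  qed
  have "?u' k = a k \<cdot>\<^sub>v ?u k"
    unfolding ex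
  proof (rule lc_single)
    fix i assume "i < e" "i \<noteq> k"
    then show "a i = 0" using below above by (cases "i < k") auto
  qed (use ke uc less(2) in auto)
  then show ?case unfolding a_def .
qed

end


context wsetup
begin

definition s0 :: "nat \<Rightarrow> nat" where "s0 l = kap (l - 1)"

lemma Z_carrier: "Z \<in> carrier_mat n m" using Z_good unfolding good_pair_eq by auto

lemma Z_col: "col Z k \<in> carrier_vec n" using Z_carrier by (metis carrier_matD(1) col_dim)

lemma Z_on: "i < m \<Longrightarrow> j < m \<Longrightarrow> conjugate (col Z i) \<bullet> col Z j = (if i = j then 1 else 0)"
  using Z_good gp_orth[OF Z_carrier] unfolding good_pair_eq by auto

lemma dd_bound: assumes "i < dd l" shows "s0 l + 1 + i < m"
proof -
  have "s0 l + 1 + i < kap l" using assms unfolding dd_def s0_def by simp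
  then show ?thesis using kap_le[of l] by simp
qed

lemma F_expr: "F b = (\<Prod>l\<in>{1..m}. \<Sum>p\<in>{p. p permutes {0..<dd l}}. signof p *
    (\<Prod>i\<in>{0..<dd l}. \<Sum>r<n. cnj (col Z (s0 l + 1 + i) $ r) * b (r, s0 l + 1 + p i)))"
  unfolding F_def
proof (intro prod.cong refl)
  fix l assume "l \<in> {1..m}"
  have "Determinant.det (Cm b l) = (\<Sum>p\<in>{p. p permutes {0..<dd l}}. signof p * (\<Prod>i = 0..<dd l. Cm b l $$ (i, p i)))"
    unfolding det_def by (simp add: Cm_def)
  also have "\<dots> = (\<Sum>p\<in>{p. p permutes {0..<dd l}}. signof p *
    (\<Prod>i\<in>{0..<dd l}. \<Sum>r<n. cnj (col Z (s0 l + 1 + i) $ r) * b (r, s0 l + 1 + p i)))"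
  proof (intro sum.cong refl arg_cong2[where f = "(*)"] prod.cong)
    fix p i assume p: "p \<in> {p. p permutes {0..<dd l}}" and i: "i \<in> {0..<dd l}"
    then have pi: "p i < dd l" using permutes_in_image[of p "{0..<dd l}" i] p i by auto
    have "Cm b l $$ (i, p i) = conjugate (col Z (s0 l + 1 + i)) \<bullet> bcol b (s0 l + 1 + p i)"
      using i pi unfolding Cm_def s0_def by simp
    also have "\<dots> = (\<Sum>r<n. cnj (col Z (s0 l + 1 + i) $ r) * bcol b (s0 l + 1 + p i) $ r)"
      by (rule cip_def) (use Z_col in auto)
    also have "\<dots> = (\<Sum>r<n. cnj (col Z (s0 l + 1 + i) $ r) * b (r, s0 l + 1 + p i))"
      by (intro sum.cong refl) (simp add: bcol_def)
    finally show "Cm b l $$ (i, p i) = (\<Sum>r<n. cnj (col Z (s0 l + 1 + i) $ r) * b (r, s0 l + 1 + p i))" .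
  qed
  finally show "Determinant.det (Cm b l) = (\<Sum>p\<in>{p. p permutes {0..<dd l}}. signof p *
    (\<Prod>i\<in>{0..<dd l}. \<Sum>r<n. cnj (col Z (s0 l + 1 + i) $ r) * b (r, s0 l + 1 + p i)))" .
qed

lemma pf_F: "pf ({0..<n} \<times> {0..<m}) F"
proof -
  have eq: "F = (\<lambda>b. \<Prod>l\<in>{1..m}. \<Sum>p\<in>{p. p permutes {0..<dd l}}. signof p *
    (\<Prod>i\<in>{0..<dd l}. \<Sum>r<n. cnj (col Z (s0 l + 1 + i) $ r) * b (r, s0 l + 1 + p i)))"
    by (rule ext, rule F_expr)
  show ?thesis unfolding eq
  proof (rule pf_prod)
    fix l assume "l \<in> {1..m}"
    show "pf ({0..<n} \<times> {0..<m}) (\<lambda>b. \<Sum>p\<in>{p. p permutes {0..<dd l}}. signof p *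
      (\<Prod>i\<in>{0..<dd l}. \<Sum>r<n. cnj (col Z (s0 l + 1 + i) $ r) * b (r, s0 l + 1 + p i)))"
    proof (rule pf_sum)
      fix p assume p: "p \<in> {p. p permutes {0..<dd l}}"
      show "pf ({0..<n} \<times> {0..<m}) (\<lambda>b. signof p *
        (\<Prod>i\<in>{0..<dd l}. \<Sum>r<n. cnj (col Z (s0 l + 1 + i) $ r) * b (r, s0 l + 1 + p i)))"
      proof (rule pf_mult[OF pf_const], rule pf_prod)
        fix i assume i: "i \<in> {0..<dd l}"
        then have pi: "p i < dd l" using permutes_in_image[of p "{0..<dd l}" i] p by auto
        show "pf ({0..<n} \<times> {0..<m}) (\<lambda>b. \<Sum>r<n. cnj (col Z (s0 l + 1 + i) $ r) * b (r, s0 l + 1 + p i))"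
        proof (rule pf_sum)
          fix r assume r: "r \<in> {..<n}"
          show "pf ({0..<n} \<times> {0..<m}) (\<lambda>b. cnj (col Z (s0 l + 1 + i) $ r) * b (r, s0 l + 1 + p i))"
            by (rule pf_mult[OF pf_const], rule pf_var) (use r dd_bound[OF pi] in auto)
        qed simp
      qed simp
    qed (simp add: finite_permutations)
  qed simp
qed

definition bstar :: "nat \<times> nat \<Rightarrow> complex" where
  "bstar = restrict (\<lambda>(r,j). Z $$ (r,j)) ({0..<n} \<times> {0..<m})"

lemma bstar_space: "bstar \<in> space (PiM ({0..<n} \<times> {0..<m}) (\<lambda>_. (lborel :: complex measure)))"
  unfolding bstar_def space_PiM by auto

lemma bcol_bstar: "j < m \<Longrightarrow> bcol bstar j = col Z j"
  using Z_carrier unfolding bcol_def bstar_def by (intro eq_vecI) auto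

lemma F_bstar: "F bstar = 1"
proof -
  have "Cm bstar l = 1\<^sub>m (dd l)" for l
  proof (rule eq_matI)
    fix a c assume "a < dim_row (1\<^sub>m (dd l) :: complex mat)" "c < dim_col (1\<^sub>m (dd l) :: complex mat)"
    then have a: "a < dd l" and c: "c < dd l" by auto
    have "Cm bstar l $$ (a,c) = conjugate (col Z (s0 l + 1 + a)) \<bullet> col Z (s0 l + 1 + c)"
      using a c dd_bound[OF c] unfolding Cm_def s0_def by (simp add: bcol_bstar)
    also have "\<dots> = (if a = c then 1 else 0)" using Z_on[OF dd_bound[OF a] dd_bound[OF c]] by simp
    finally show "Cm bstar l $$ (a,c) = 1\<^sub>m (dd l) $$ (a,c)" using a c by simp
  qed (auto simp: Cm_def)
  then show ?thesis unfolding F_def by simp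
qed

end

theorem theorem1:
  fixes A :: "complex mat" and lam :: complex and n m :: nat
  assumes "A \<in> carrier_mat n n"
    and "eigenvalue A lam"
    and "m = Polynomial.order lam (char_poly A)"
  shows "AE b in PiM ({0..<n} \<times> {0..<m}) (\<lambda>_. (lborel :: complex measure)).
     \<exists>U S. good_pair A lam m b U S \<and>
       (\<forall>U' S'. good_pair A lam m b U' S' \<longrightarrow>
          S' = mat_adjoint U' * (A - lam \<cdot>\<^sub>m 1\<^sub>m n) * U' \<and>
          (\<exists>\<alpha>. (\<forall>i<m. cmod (\<alpha> i) = 1) \<and> U' = U * mat_diag m \<alpha>))"
proof -
  interpret W: wsetup A n lam m by unfold_locales (use assms in auto)
  let ?I = "{0..<n} \<times> {0..<m}"
  let ?M = "PiM ?I (\<lambda>_. (lborel :: complex measure))"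
  have Nnull: "{b \<in> space ?M. W.F b = 0} \<in> null_sets ?M"
    by (rule pf_null[OF _ W.pf_F W.bstar_space]) (use W.F_bstar in auto)
  show ?thesis
  proof (rule AE_I'[OF Nnull], safe)
    fix b assume bs: "b \<in> space ?M" and nP: "\<not> (\<exists>U S. good_pair A lam m b U S \<and>
       (\<forall>U' S'. good_pair A lam m b U' S' \<longrightarrow>
          S' = mat_adjoint U' * (A - lam \<cdot>\<^sub>m 1\<^sub>m n) * U' \<and>
          (\<exists>\<alpha>. (\<forall>i<m. cmod (\<alpha> i) = 1) \<and> U' = U * mat_diag m \<alpha>)))"
    show "W.F b = 0"
    proof (rule ccontr)
      assume Fb: "W.F b \<noteq> 0"
      obtain U S where gp: "good_pair A lam m b U S" using W.exists_good by blast
      have D: "\<And>j. j < m \<Longrightarrow> W.kap (W.L j - 1) < j \<Longrightarrow> conjugate (col U j) \<bullet> W.bcol b j \<noteq> 0"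
        by (rule W.diag_nz[OF Fb gp])
      have "\<forall>U' S'. good_pair A lam m b U' S' \<longrightarrow>
          S' = mat_adjoint U' * (A - lam \<cdot>\<^sub>m 1\<^sub>m n) * U' \<and>
          (\<exists>\<alpha>. (\<forall>i<m. cmod (\<alpha> i) = 1) \<and> U' = U * mat_diag m \<alpha>)"
      proof (intro allI impI conjI)
        fix U' S' assume gp': "good_pair A lam m b U' S'"
        show "S' = mat_adjoint U' * (A - lam \<cdot>\<^sub>m 1\<^sub>m n) * U'" by (rule W.gp_S[OF gp'])
        from gp have U: "U \<in> carrier_mat n m" and UU: "mat_adjoint U * U = 1\<^sub>m m"
          unfolding W.good_pair_eq by auto
        from gp' have U': "U' \<in> carrier_mat n m" and UU': "mat_adjoint U' * U' = 1\<^sub>m m"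
          unfolding W.good_pair_eq by auto
        define \<alpha> where "\<alpha> k = conjugate (col U k) \<bullet> col U' k" for k
        have cu: "col U' k = \<alpha> k \<cdot>\<^sub>v col U k" if "k < m" for k
          unfolding \<alpha>_def by (rule W.unique_U[OF D gp gp' that])
        show "\<exists>\<alpha>. (\<forall>i<m. cmod (\<alpha> i) = 1) \<and> U' = U * mat_diag m \<alpha>"
        proof (intro exI[of _ \<alpha>] conjI allI impI)
          fix i assume i: "i < m"
          have "1 = conjugate (col U' i) \<bullet> col U' i" using W.gp_orth[OF U' UU' i i] by simp
          also have "\<dots> = cnj (\<alpha> i) * \<alpha> i * (conjugate (col U i) \<bullet> col U i)"
            unfolding cu[OF i] conjugate_smult_vec using U i by (simp add: mult.assoc)
          also have "\<dots> = cnj (\<alpha> i) * \<alpha> i" using W.gp_orth[OF U UU i i] by simp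
          finally show "cmod (\<alpha> i) = 1" by (intro cnj_mult_one) simp
        next
          show "U' = U * mat_diag m \<alpha>"
          proof (rule eq_matI)
            fix r k assume "r < dim_row (U * mat_diag m \<alpha>)" "k < dim_col (U * mat_diag m \<alpha>)"
            then have r: "r < n" and k: "k < m" using U by (auto simp: mat_diag_def)
            have "(U * mat_diag m \<alpha>) $$ (r,k) = (\<Sum>p<m. U $$ (r,p) * mat_diag m \<alpha> $$ (p,k))"
              by (rule mult_mat_index_sum[OF U _ r k]) (simp add: mat_diag_def)
            also have "\<dots> = U $$ (r,k) * \<alpha> k"
              using k by (simp add: mat_diag_def if_distrib cong: if_cong)
            also have "\<dots> = U' $$ (r,k)"
              using arg_cong[OF cu[OF k], of "\<lambda>v. v $ r"] U U' r k by simp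
            finally show "U' $$ (r,k) = (U * mat_diag m \<alpha>) $$ (r,k)" by simp
          qed (use U U' in \<open>auto simp: mat_diag_def\<close>)
        qed
      qed
      with gp nP show False by blast
    qed
  qed
qed


end
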